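(* Let $f=\prod_{i=1}^n(y-a_i)\in\overline K[y]$ be reduced ($a_i$ pairwise distinct, $n\ge 2$) with $\nu(a_i)>0$ for all $i$. (i) For every $w=\sum_iw_i\varepsilon_i\in\overline{\mathcal E}$, the solution $(u,v)\in\overline{\mathcal F}\times\overline{\mathcal F}$ of $uf'_x+vf'_y=w$ is $$u=(\mathcal A_{|\overline{\mathcal F}})^{-1}\mathcal Bw,\qquad v=\sum_{i=1}^n\Bigl(u_ia'_i+\frac{w_i}{\varepsilon_i(a_i)}\Bigr)\varepsilon_i,$$ where $u=\sum_iu_i\varepsilon_i$. In particular, for every $r\in\mathbf Q$, $\overline{\mathcal E}_r\subset\overline{\mathcal F}_{r-\theta}f'_x+\overline{\mathcal F}_{r-\tau}f'_y$. (ii) If $w=uf'_x+vf'_y\in\overline{\mathcal E}_r$ with $u\in\overline{\mathcal F}_{r-\theta}$ and $v\in\overline{\mathcal F}_{r-\tau}$, then $u'_x+v'_y\in\overline{\mathcal F}_{r-\pi}$.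
   Context: $\overline K=\bigcup_{d\ge1}\mathbf C[[x^{1/d}]][1/x]$ with valuation $\nu$; $'$, $\partial_x$ denote $d/dx$. $\overline{\mathcal E}$: polynomials in $y$ over $\overline K$ of degree $<n$, with basis $\varepsilon_i=\prod_{j\ne i}(y-a_j)$; $\varepsilon_i(a_i)=\prod_{j\ne i}(a_i-a_j)$; $\overline{\mathcal F}=\{\sum u_i\varepsilon_i:\sum u_i=0\}$ (degree $<n-1$). $\mathrm{val}(\sum w_i\varepsilon_i)=\inf\nu(w_i)$; $\overline{\mathcal E}_r$ = elements with $\mathrm{val}\ge r$, $\overline{\mathcal F}_r=\overline{\mathcal E}_r\cap\overline{\mathcal F}$. $m_{i,j}=\nu(a_i-a_j)$, $m_i=\sum_{j\ne i}m_{i,j}$, $\pi=\sup\{m_i+m_{i,j}:i\ne j\}$, $\delta=\inf_i\nu(a_i)$, $\theta=\pi-1$, $\tau=\pi-\delta$. $\mathcal A$ is the symmetric matrix with off-diagonal entries $-(a'_i-a'_j)/(a_i-a_j)$ and diagonal entries $\sum_{j\ne i}(a'_i-a'_j)/(a_i-a_j)$; it restricts to an automorphism $\mathcal A_{|\overline{\mathcal F}}$ of $\overline{\mathcal F}$. $\mathcal B$ is the symmetric matrix with off-diagonal entries $\beta_{i,j}=-(\varepsilon_i(a_i)-\varepsilon_j(a_j))/((a_i-a_j)\varepsilon_i(a_i)\varepsilon_j(a_j))$ and diagonal entries $\beta_{i,i}=-\sum_{j\ne i}\beta_{i,j}$ (row and column sums zero). Matrices act on $\overline{\mathcal E}$ through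 coordinates in the basis $(\varepsilon_i)$. *)

theory Defs
  imports "HOL-Computational_Algebra.Computational_Algebra"
begin

text \<open>
  An element of the Puiseux field lying in
  C((x^(1/d))) is represented by a formal Laurent series p in t = x^(1/d),
  i.e. by a value of type complex fls, for a fixed integer d >= 1.
  Every finite family of Puiseux series lies in such a subfield, and the
  subfields are compatible (as differential valued fields), so a statement
  universally quantified over d >= 1 is the statement over the whole
  Puiseux field.
\<close>

type_synonym puis = "complex fls"

text \<open>The valuation nu (in powers of x) of a nonzero element: subdegree in t divided by d.\<close>
definition pnu :: "nat \<Rightarrow> puis \<Rightarrow> rat" where
  "pnu d p = of_int (fls_subdegree p) / of_nat d"

definition pnu_ge :: "nat \<Rightarrow> puis \<Rightarrow> rat \<Rightarrow> bool" where
  "pnu_ge d p r \<longleftrightarrow> p = 0 \<or> r \<le> pnu d p"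

text \<open>The derivation d/dx: with t = x^(1/d), d/dx (t^m) = (m/d) t^(m-d).\<close>
definition pder :: "nat \<Rightarrow> puis \<Rightarrow> puis" where
  "pder d p = fls_const (1 / of_nat d) * fls_shift (int d - 1) (fls_deriv p)"

definition fpol :: "(nat \<Rightarrow> puis) \<Rightarrow> nat \<Rightarrow> puis poly" where
  "fpol a n = (\<Prod>i<n. [:- a i, 1:])"

definition pdx :: "nat \<Rightarrow> puis poly \<Rightarrow> puis poly" where
  "pdx d p = map_poly (pder d) p"

definition eps :: "(nat \<Rightarrow> puis) \<Rightarrow> nat \<Rightarrow> nat \<Rightarrow> puis poly" where
  "eps a n i = (\<Prod>j\<in>{..<n} - {i}. [:- a j, 1:])"

definition epsv :: "(nat \<Rightarrow> puis) \<Rightarrow> nat \<Rightarrow> nat \<Rightarrow> puis" where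
  "epsv a n i = (\<Prod>j\<in>{..<n} - {i}. a i - a j)"

definition elem :: "(nat \<Rightarrow> puis) \<Rightarrow> nat \<Rightarrow> (nat \<Rightarrow> puis) \<Rightarrow> puis poly" where
  "elem a n w = (\<Sum>i<n. smult (w i) (eps a n i))"

definition coord :: "(nat \<Rightarrow> puis) \<Rightarrow> nat \<Rightarrow> puis poly \<Rightarrow> nat \<Rightarrow> puis" where
  "coord a n p i = poly p (a i) / epsv a n i"

definition inE :: "nat \<Rightarrow> puis poly \<Rightarrow> bool" where
  "inE n p \<longleftrightarrow> degree p < n"

definition inF :: "(nat \<Rightarrow> puis) \<Rightarrow> nat \<Rightarrow> puis poly \<Rightarrow> bool" where
  "inF a n p \<longleftrightarrow> inE n p \<and> (\<Sum>i<n. coord a n p i) = 0"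

definition val_ge :: "nat \<Rightarrow> (nat \<Rightarrow> puis) \<Rightarrow> nat \<Rightarrow> puis poly \<Rightarrow> rat \<Rightarrow> bool" where
  "val_ge d a n p r \<longleftrightarrow> (\<forall>i<n. pnu_ge d (coord a n p i) r)"

definition mij :: "nat \<Rightarrow> (nat \<Rightarrow> puis) \<Rightarrow> nat \<Rightarrow> nat \<Rightarrow> rat" where
  "mij d a i j = pnu d (a i - a j)"

definition mi :: "nat \<Rightarrow> (nat \<Rightarrow> puis) \<Rightarrow> nat \<Rightarrow> nat \<Rightarrow> rat" where
  "mi d a n i = (\<Sum>j\<in>{..<n} - {i}. mij d a i j)"

definition piinv :: "nat \<Rightarrow> (nat \<Rightarrow> puis) \<Rightarrow> nat \<Rightarrow> rat" where
  "piinv d a n = Max {mi d a n i + mij d a i j | i j. i < n \<and> j < n \<and> i \<noteq> j}"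

text \<open>delta = inf_i nu(a_i); a zero a_i has valuation +infinity and does not
  contribute (at most one a_i is zero since they are distinct and n >= 2).\<close>
definition deltainv :: "nat \<Rightarrow> (nat \<Rightarrow> puis) \<Rightarrow> nat \<Rightarrow> rat" where
  "deltainv d a n = Min {pnu d (a i) | i. i < n \<and> a i \<noteq> 0}"

definition thetainv :: "nat \<Rightarrow> (nat \<Rightarrow> puis) \<Rightarrow> nat \<Rightarrow> rat" where
  "thetainv d a n = piinv d a n - 1"

definition tauinv :: "nat \<Rightarrow> (nat \<Rightarrow> puis) \<Rightarrow> nat \<Rightarrow> rat" where
  "tauinv d a n = piinv d a n - deltainv d a n"

definition Amat :: "nat \<Rightarrow> (nat \<Rightarrow> puis) \<Rightarrow> nat \<Rightarrow> nat \<Rightarrow> nat \<Rightarrow> puis" where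
  "Amat d a n i j = (if i = j
     then (\<Sum>k\<in>{..<n} - {i}. (pder d (a i) - pder d (a k)) / (a i - a k))
     else - (pder d (a i) - pder d (a j)) / (a i - a j))"

definition beta :: "(nat \<Rightarrow> puis) \<Rightarrow> nat \<Rightarrow> nat \<Rightarrow> nat \<Rightarrow> puis" where
  "beta a n i j = - (epsv a n i - epsv a n j) / ((a i - a j) * epsv a n i * epsv a n j)"

definition Bmat :: "(nat \<Rightarrow> puis) \<Rightarrow> nat \<Rightarrow> nat \<Rightarrow> nat \<Rightarrow> puis" where
  "Bmat a n i j = (if i = j then - (\<Sum>k\<in>{..<n} - {i}. beta a n i k) else beta a n i j)"

definition matvec :: "nat \<Rightarrow> (nat \<Rightarrow> nat \<Rightarrow> puis) \<Rightarrow> (nat \<Rightarrow> puis) \<Rightarrow> nat \<Rightarrow> puis" where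
  "matvec n M x i = (\<Sum>j<n. M i j * x j)"

end

theory Submission
  imports Defs "Jordan_Normal_Form.Determinant"
begin

hide_const (open) Module.module.smult Congruence.elem

lemma pderiv_sum: "pderiv (sum f S) = (\<Sum>x\<in>S. pderiv (f x))"
  by (induction S rule: infinite_finite_induct) (auto simp: pderiv_add)

lemma poly_lin: fixes b x :: "'a::comm_ring_1" shows "poly [:- b, 1:] x = x - b" by (simp add: algebra_simps)

lemma prod_lin_dvd:
  fixes a :: "nat \<Rightarrow> 'a::{idom}"
  assumes inj: "\<And>i j. i<n \<Longrightarrow> j<n \<Longrightarrow> i\<noteq>j \<Longrightarrow> a i \<noteq> a j" and p: "p \<noteq> 0"
    and dv: "\<And>i. i<n \<Longrightarrow> [:-a i,1:]^k dvd p"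
  shows "(\<Prod>i<n. [:-a i,1:]^k) dvd p"
  using inj dv
proof (induction n)
  case 0 thus ?case by simp
next
  case (Suc n)
  have "(\<Prod>i<n. [:-a i,1:]^k) dvd p" using Suc by auto
  then obtain q where q: "p = (\<Prod>i<n. [:-a i,1:]^k) * q" by (elim dvdE)
  have "poly (\<Prod>i<n. [:-a i,1:]^k) (a n) \<noteq> 0"
    using Suc.prems(1) by (auto simp: poly_prod)
  hence o0: "order (a n) (\<Prod>i<n. [:-a i,1:]^k) = 0" by (simp add: order_root)
  have "k \<le> order (a n) p" using Suc.prems(2)[of n] p by (simp add: order_divides)
  also have "order (a n) p = order (a n) (\<Prod>i<n. [:-a i,1:]^k) + order (a n) q"
    using p q by (simp add: order_mult)
  finally have "k \<le> order (a n) q" using o0 by simp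
  hence "[:-a n,1:]^k dvd q" by (simp add: order_divides)
  hence "(\<Prod>i<n. [:-a i,1:]^k) * [:-a n,1:]^k dvd (\<Prod>i<n. [:-a i,1:]^k) * q"
    by (rule mult_dvd_mono[OF dvd_refl])
  thus ?case using q by simp
qed

lemma zero_crit:
  fixes a :: "nat \<Rightarrow> 'a::{idom}"
  assumes inj: "\<And>i j. i<n \<Longrightarrow> j<n \<Longrightarrow> i\<noteq>j \<Longrightarrow> a i \<noteq> a j"
    and dv: "\<And>i. i<n \<Longrightarrow> [:-a i,1:]^k dvd p" and deg: "degree p < k * n"
  shows "p = 0"
proof (rule ccontr)
  assume p: "p \<noteq> 0"
  have "degree (\<Prod>i<n. [:-a i,1:]^k) \<le> degree p"
    by (rule dvd_imp_degree_le[OF prod_lin_dvd[OF inj p dv] p])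
  moreover have "degree (\<Prod>i<n. [:-a i,1:]^k) = k * n"
    by (simp add: degree_prod_sum_eq degree_linear_power)
  ultimately show False using deg by simp
qed

lemma root_dvd2:
  fixes p :: "'a::{idom,semiring_char_0} poly"
  assumes "poly p x = 0" "poly (pderiv p) x = 0"
  shows "[:-x,1:]^2 dvd p"
proof (cases "p = 0")
  case True thus ?thesis by simp
next
  case False
  have "pderiv p \<noteq> 0"
  proof
    assume "pderiv p = 0"
    hence "degree p = 0" by (simp add: pderiv_eq_0_iff)
    then obtain c where "p = [:c:]" by (metis degree_eq_zeroE)
    thus False using assms(1) False by simp
  qed
  hence "order x (pderiv p) \<noteq> 0" using assms(2) by (simp add: order_root)
  hence "2 \<le> order x p" using order_pderiv[OF False assms(1)] by simp
  thus ?thesis by (simp add: order_divides)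
qed

lemma pderiv_lin: "pderiv [:- b, 1:] = 1"
  by (simp add: pderiv_pCons)


definition Sn :: "(nat \<Rightarrow> puis) \<Rightarrow> nat \<Rightarrow> nat \<Rightarrow> (nat \<Rightarrow> puis) \<Rightarrow> puis" where
  "Sn a n i c = (\<Sum>j\<in>{..<n}-{i}. (c i + c j) / (a i - a j))"

locale pts =
  fixes a :: "nat \<Rightarrow> puis" and n :: nat
  assumes dist: "\<And>i j. i<n \<Longrightarrow> j<n \<Longrightarrow> i\<noteq>j \<Longrightarrow> a i \<noteq> a j"
begin

lemma poly_eps:
  assumes "i<n" "j<n"
  shows "poly (eps a n j) (a i) = (if i = j then epsv a n i else 0)"
proof (cases "i = j")
  case True thus ?thesis by (simp add: eps_def epsv_def poly_prod)
next
  case False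
  have "i \<in> {..<n} - {j}" using assms False by auto
  hence "(\<Prod>k\<in>{..<n} - {j}. a i - a k) = 0" by (intro prod_zero) auto
  thus ?thesis using False by (simp add: eps_def poly_prod)
qed

lemma epsv_nz:
  assumes "i<n"
  shows "epsv a n i \<noteq> 0"
  using assms dist by (force simp: epsv_def)

lemma degree_eps: "j < n \<Longrightarrow> degree (eps a n j) = n - 1"
  by (simp add: eps_def degree_prod_sum_eq)

lemma lead_eps: "j < n \<Longrightarrow> coeff (eps a n j) (n - 1) = 1"
proof -
  assume j: "j < n"
  have "lead_coeff (eps a n j) = 1" by (simp add: eps_def lead_coeff_prod)
  thus ?thesis using degree_eps[OF j] by simp
qed

lemma degree_elem: "degree (elem a n c) \<le> n - 1"
  unfolding Defs.elem_def
  by (rule degree_sum_le) (auto intro: order.trans[OF degree_smult_le] simp: degree_eps)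

lemma poly_elem:
  assumes i: "i<n"
  shows "poly (elem a n c) (a i) = c i * epsv a n i"
proof -
  have "poly (elem a n c) (a i) = (\<Sum>j<n. c j * poly (eps a n j) (a i))"
    by (simp add: Defs.elem_def poly_sum)
  also have "\<dots> = (\<Sum>j<n. if j = i then c i * epsv a n i else 0)"
    by (rule sum.cong) (auto simp: poly_eps[OF i])
  also have "\<dots> = c i * epsv a n i" using i by simp
  finally show ?thesis .
qed

lemma coord_elem:
  assumes i: "i<n"
  shows "coord a n (elem a n c) i = c i"
  using epsv_nz[OF i] by (simp add: coord_def poly_elem[OF i])

lemma elem_cong: "(\<And>i. i < n \<Longrightarrow> c i = c' i) \<Longrightarrow> elem a n c = elem a n c'"
  by (simp add: Defs.elem_def)

lemma lagrange:
  assumes deg: "degree p < n"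
  shows "p = elem a n (coord a n p)"
proof -
  let ?D = "p - elem a n (coord a n p)"
  have "degree ?D < 1 * n"
  proof -
    have "degree (elem a n (coord a n p)) < n" using degree_elem[of "coord a n p"] deg by linarith
    thus ?thesis using deg by (simp add: degree_diff_less)
  qed
  moreover have "[:-a i,1:]^1 dvd ?D" if i: "i<n" for i
  proof -
    have "poly ?D (a i) = 0"
      using epsv_nz[OF i] by (simp add: poly_elem[OF i] coord_def)
    thus ?thesis by (simp only: poly_eq_0_iff_dvd power_one_right)
  qed
  ultimately have "?D = 0" by (intro zero_crit[where k=1, OF dist]) auto
  thus ?thesis by simp
qed

lemma coeff_elem: "coeff (elem a n c) (n - 1) = (\<Sum>i<n. c i)"
  unfolding Defs.elem_def coeff_sum coeff_smult by (rule sum.cong) (auto simp: lead_eps[simplified])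

lemma sum_coord:
  assumes deg: "degree p < n"
  shows "(\<Sum>i<n. coord a n p i) = coeff p (n - 1)"
  using coeff_elem[of "coord a n p"] lagrange[OF deg] by simp

lemma poly_pderiv_eps:
  assumes i: "i<n" and j: "j<n"
  shows "poly (pderiv (eps a n j)) (a i) =
    (if j = i then epsv a n i * (\<Sum>k\<in>{..<n}-{i}. 1 / (a i - a k)) else epsv a n i / (a i - a j))"
proof -
  let ?S = "{..<n} - {j}"
  have "poly (pderiv (eps a n j)) (a i) = (\<Sum>k\<in>?S. \<Prod>l\<in>?S - {k}. a i - a l)"
    by (simp add: eps_def pderiv_prod pderiv_lin poly_sum poly_prod)
  also have "\<dots> = (if j = i then epsv a n i * (\<Sum>k\<in>{..<n}-{i}. 1 / (a i - a k)) else epsv a n i / (a i - a j))"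
  proof (cases "j = i")
    case True
    have "(\<Prod>l\<in>?S - {k}. a i - a l) = epsv a n i * (1 / (a i - a k))" if k: "k \<in> ?S" for k
    proof -
      have nz: "a i - a k \<noteq> 0" using k dist[of i k] i True by auto
      have "epsv a n i = (a i - a k) * (\<Prod>l\<in>?S - {k}. a i - a l)"
        unfolding epsv_def using k True by (simp add: prod.remove)
      thus ?thesis using nz by (simp add: field_simps)
    qed
    hence "(\<Sum>k\<in>?S. \<Prod>l\<in>?S - {k}. a i - a l) = (\<Sum>k\<in>?S. epsv a n i * (1 / (a i - a k)))"
      by (rule sum.cong[OF refl])
    thus ?thesis using True by (simp add: sum_distrib_left)
  next
    case False
    have iS: "i \<in> ?S" using i False by auto
    have z: "(\<Prod>l\<in>?S - {k}. a i - a l) = 0" if "k \<in> ?S - {i}" for k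
      using that iS by (intro prod_zero bexI[of _ i]) auto
    have "(\<Sum>k\<in>?S. \<Prod>l\<in>?S - {k}. a i - a l) = (\<Prod>l\<in>?S - {i}. a i - a l) + (\<Sum>k\<in>?S - {i}. \<Prod>l\<in>?S - {k}. a i - a l)"
      using iS by (simp add: sum.remove)
    also have "\<dots> = (\<Prod>l\<in>?S - {i}. a i - a l)"
    proof -
      have "(\<Sum>k\<in>?S - {i}. \<Prod>l\<in>?S - {k}. a i - a l) = 0" by (rule sum.neutral) (use z in blast)
      thus ?thesis by simp
    qed
    also have "\<dots> = epsv a n i / (a i - a j)"
    proof -
      have nz: "a i - a j \<noteq> 0" using dist[of i j] i j False by auto
      have jS: "j \<in> {..<n} - {i}" using j False by auto
      have "epsv a n i = (a i - a j) * (\<Prod>l\<in>{..<n} - {i} - {j}. a i - a l)"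
        unfolding epsv_def using jS by (simp add: prod.remove)
      moreover have "{..<n} - {i} - {j} = ?S - {i}" by auto
      ultimately show ?thesis using nz by (simp add: field_simps)
    qed
    finally show ?thesis using False by simp
  qed
  finally show ?thesis .
qed

lemma poly_pderiv_elem:
  assumes i: "i<n"
  shows "poly (pderiv (elem a n c)) (a i) = epsv a n i * Sn a n i c"
proof -
  let ?e = "epsv a n i"
  let ?S = "{..<n} - {i}"
  have "poly (pderiv (elem a n c)) (a i) = (\<Sum>j<n. c j * poly (pderiv (eps a n j)) (a i))"
    by (simp add: Defs.elem_def pderiv_sum pderiv_smult poly_sum)
  also have "\<dots> = c i * poly (pderiv (eps a n i)) (a i) + (\<Sum>j\<in>?S. c j * poly (pderiv (eps a n j)) (a i))"
    using i by (simp add: sum.remove)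
  also have "\<dots> = c i * (?e * (\<Sum>k\<in>?S. 1 / (a i - a k))) + (\<Sum>j\<in>?S. c j * (?e / (a i - a j)))"
  proof -
    have "\<And>j. j \<in> ?S \<Longrightarrow> c j * poly (pderiv (eps a n j)) (a i) = c j * (?e / (a i - a j))"
      using poly_pderiv_eps i by auto
    hence "(\<Sum>j\<in>?S. c j * poly (pderiv (eps a n j)) (a i)) = (\<Sum>j\<in>?S. c j * (?e / (a i - a j)))"
      by (rule sum.cong[OF refl])
    thus ?thesis using i by (simp add: poly_pderiv_eps)
  qed
  also have "\<dots> = ?e * Sn a n i c"
    unfolding Sn_def add_divide_distrib sum.distrib
    by (simp add: sum_distrib_left algebra_simps)
  finally show ?thesis .
qed

lemma pderiv_fpol: "pderiv (fpol a n) = elem a n (\<lambda>_. 1)"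
  by (simp add: fpol_def Defs.elem_def eps_def pderiv_prod pderiv_lin)

lemma poly_fpol: "i < n \<Longrightarrow> poly (fpol a n) (a i) = 0"
  by (simp add: fpol_def poly_prod) (metis lessThan_iff)

lemma degree_fpol: "degree (fpol a n) = n"
  by (simp add: fpol_def degree_prod_sum_eq)

lemma lead_fpol: "coeff (fpol a n) n = 1"
proof -
  have "lead_coeff (fpol a n) = 1" by (simp add: fpol_def lead_coeff_prod)
  thus ?thesis using degree_fpol by simp
qed

end


lemma pder_nth: "fls_nth (pder d p) k = of_int (k + int d) / of_nat d * fls_nth p (k + int d)"
  by (cases "d = 0") (simp_all add: pder_def field_simps)

lemma pder_add: "pder d (p + q) = pder d p + pder d q"
  by (simp add: pder_def distrib_left)
lemma pder_uminus: "pder d (- p) = - pder d p"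
  by (simp add: pder_def)
lemma pder_diff: "pder d (p - q) = pder d p - pder d q"
  by (simp add: pder_def right_diff_distrib)
lemma pder_zero[simp]: "pder d 0 = 0"
  by (simp add: pder_def)
lemma pder_const[simp]: "pder d (fls_const c) = 0"
  by (simp add: pder_def)
lemma pder_sum: "pder d (sum f S) = (\<Sum>x\<in>S. pder d (f x))"
  by (induction S rule: infinite_finite_induct) (auto simp: pder_add)
lemma pder_mult: "pder d (p * q) = pder d p * q + p * pder d q"
  by (simp add: pder_def fls_shifted_times_simps algebra_simps)
lemma pder_of_nat[simp]: "pder d (of_nat k) = 0"
  by (simp add: pder_def)
lemma pder_of_nat_mult: "pder d (of_nat k * p) = of_nat k * pder d p"
  by (simp add: pder_mult)

lemma pdx_pCons: "pdx d (pCons c p) = pCons (pder d c) (pdx d p)"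
  by (simp add: pdx_def map_poly_pCons)
lemma coeff_pdx: "coeff (pdx d p) k = pder d (coeff p k)"
  by (simp add: pdx_def coeff_map_poly)
lemma pdx_add: "pdx d (p + q) = pdx d p + pdx d q"
  by (rule poly_eqI) (simp add: coeff_pdx pder_add)
lemma pdx_pderiv: "pdx d (pderiv p) = pderiv (pdx d p)"
  by (rule poly_eqI) (simp add: coeff_pdx coeff_pderiv pder_of_nat_mult del: of_nat_Suc)
lemma degree_pdx: "degree (pdx d p) \<le> degree p"
  by (simp add: pdx_def map_poly_degree_leq)

lemma chain_rule: "poly (pdx d p) z = pder d (poly p z) - poly (pderiv p) z * pder d z"
proof (induction p rule: pCons_induct)
  case 0
  thus ?case by (simp add: pdx_def)
next
  case (pCons c p)
  show ?case
    by (simp add: pdx_pCons pderiv_pCons pCons.IH pder_add pder_mult algebra_simps)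
qed

lemma pnu_ge_iff:
  assumes d: "d \<ge> 1"
  shows "pnu_ge d p r \<longleftrightarrow> (\<forall>k. of_int k < r * of_nat d \<longrightarrow> fls_nth p k = 0)"
proof (cases "p = 0")
  case True thus ?thesis by (simp add: pnu_ge_def)
next
  case False
  have dpos: "(0::rat) < of_nat d" using d by simp
  show ?thesis
  proof
    assume "pnu_ge d p r"
    hence "r \<le> of_int (fls_subdegree p) / of_nat d" using False by (simp add: pnu_ge_def pnu_def)
    hence le: "r * of_nat d \<le> of_int (fls_subdegree p)" using dpos by (simp add: le_divide_eq)
    show "\<forall>k. of_int k < r * of_nat d \<longrightarrow> fls_nth p k = 0"
    proof (intro allI impI)
      fix k assume "of_int k < r * of_nat d"
      hence "k < fls_subdegree p" using le by linarith
      thus "fls_nth p k = 0" by simp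
    qed
  next
    assume H: "\<forall>k. of_int k < r * of_nat d \<longrightarrow> fls_nth p k = 0"
    have "fls_nth p (fls_subdegree p) \<noteq> 0" using False by simp
    hence "\<not> of_int (fls_subdegree p) < r * of_nat d" using H by blast
    hence "r \<le> of_int (fls_subdegree p) / of_nat d" using dpos by (simp add: le_divide_eq)
    thus "pnu_ge d p r" by (simp add: pnu_ge_def pnu_def)
  qed
qed

lemma pnu_ge_zero[simp]: "pnu_ge d 0 r"
  by (simp add: pnu_ge_def)

lemma pnu_ge_add: "d \<ge> 1 \<Longrightarrow> pnu_ge d p r \<Longrightarrow> pnu_ge d q r \<Longrightarrow> pnu_ge d (p + q) r"
  by (simp add: pnu_ge_iff)
lemma pnu_ge_uminus: "d \<ge> 1 \<Longrightarrow> pnu_ge d p r \<Longrightarrow> pnu_ge d (- p) r"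
  by (simp add: pnu_ge_iff)
lemma pnu_ge_diff: "d \<ge> 1 \<Longrightarrow> pnu_ge d p r \<Longrightarrow> pnu_ge d q r \<Longrightarrow> pnu_ge d (p - q) r"
  by (simp add: pnu_ge_iff)
lemma pnu_ge_sum: "d \<ge> 1 \<Longrightarrow> (\<And>x. x \<in> S \<Longrightarrow> pnu_ge d (f x) r) \<Longrightarrow> pnu_ge d (sum f S) r"
  by (simp add: pnu_ge_iff fls_nth_sum)
lemma pnu_ge_mono: "d \<ge> 1 \<Longrightarrow> pnu_ge d p r \<Longrightarrow> s \<le> r \<Longrightarrow> pnu_ge d p s"
  by (auto simp: pnu_ge_def)
lemma pnu_ge_self: "pnu_ge d p (pnu d p)"
  by (simp add: pnu_ge_def)

lemma pnu_mult: "p \<noteq> 0 \<Longrightarrow> q \<noteq> 0 \<Longrightarrow> pnu d (p * q) = pnu d p + pnu d q"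
  by (simp add: pnu_def add_divide_distrib)
lemma pnu_inverse: "pnu d (inverse p) = - pnu d p"
  by (simp add: pnu_def)
lemma pnu_uminus[simp]: "pnu d (- p) = pnu d p"
  by (simp add: pnu_def)
lemma pnu_diff_sym: "pnu d (p - q) = pnu d (q - p)"
  by (metis minus_diff_eq pnu_uminus)
lemma pnu_prod: "(\<And>x. x \<in> S \<Longrightarrow> f x \<noteq> 0) \<Longrightarrow> pnu d (prod f S) = (\<Sum>x\<in>S. pnu d (f x))"
  by (simp add: pnu_def fls_subdegree_prod sum_divide_distrib)

lemma pnu_ge_mult:
  assumes "pnu_ge d p r" "pnu_ge d q s"
  shows "pnu_ge d (p * q) (r + s)"
proof (cases "p = 0 \<or> q = 0")
  case True thus ?thesis by auto
next
  case False
  hence "p * q \<noteq> 0" by simp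
  thus ?thesis using assms False by (simp add: pnu_ge_def pnu_mult)
qed

lemma pnu_ge_divide:
  assumes "pnu_ge d p r" "q \<noteq> 0"
  shows "pnu_ge d (p / q) (r - pnu d q)"
proof -
  have "pnu_ge d (inverse q) (- pnu d q)"
    using pnu_ge_self[of d "inverse q"] by (simp add: pnu_inverse)
  from pnu_ge_mult[OF assms(1) this] show ?thesis by (simp add: divide_inverse)
qed

lemma pnu_ge_pder:
  assumes d: "d \<ge> 1" and h: "pnu_ge d p r"
  shows "pnu_ge d (pder d p) (r - 1)"
  unfolding pnu_ge_iff[OF d]
proof (intro allI impI)
  fix k :: int assume "of_int k < (r - 1) * of_nat d"
  hence "of_int (k + int d) < r * of_nat d" by (simp add: algebra_simps)
  hence "fls_nth p (k + int d) = 0" using h by (simp add: pnu_ge_iff[OF d])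
  thus "fls_nth (pder d p) k = 0" by (simp add: pder_nth)
qed


lemma lapRe:
  fixes z :: "nat \<Rightarrow> complex" and \<mu> :: "nat \<Rightarrow> nat \<Rightarrow> real"
  assumes mu: "\<And>i j. i<n \<Longrightarrow> j<n \<Longrightarrow> i\<noteq>j \<Longrightarrow> \<mu> i j > 0"
    and eq: "\<And>i. i<n \<Longrightarrow> (\<Sum>j\<in>{..<n}-{i}. of_real (\<mu> i j) * (z i - z j)) = 0"
    and s: "(\<Sum>i<n. z i) = 0"
  shows "\<forall>i<n. Re (z i) = 0"
proof (cases "n = 0")
  case True thus ?thesis by simp
next
  case False
  define M where "M = Max ((\<lambda>i. Re (z i)) ` {..<n})"
  have fin: "finite ((\<lambda>i. Re (z i)) ` {..<n})" by simp
  have ne: "(\<lambda>i. Re (z i)) ` {..<n} \<noteq> {}" using False by auto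
  have Mge: "\<And>i. i<n \<Longrightarrow> Re (z i) \<le> M" unfolding M_def using fin by auto
  obtain m where m: "m < n" "Re (z m) = M" using Max_in[OF fin ne] unfolding M_def by auto
  have "Re (\<Sum>j\<in>{..<n}-{m}. of_real (\<mu> m j) * (z m - z j)) = 0" using eq[OF m(1)] by simp
  hence "(\<Sum>j\<in>{..<n}-{m}. \<mu> m j * (Re (z m) - Re (z j))) = 0" by (simp add: Re_sum)
  moreover have "\<And>j. j \<in> {..<n}-{m} \<Longrightarrow> 0 \<le> \<mu> m j * (Re (z m) - Re (z j))"
  proof -
    fix j assume j: "j \<in> {..<n}-{m}"
    have "0 < \<mu> m j" using mu[of m j] m j by auto
    moreover have "0 \<le> Re (z m) - Re (z j)" using Mge[of j] m j by auto
    ultimately show "0 \<le> \<mu> m j * (Re (z m) - Re (z j))" by simp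
  qed
  ultimately have "\<forall>j\<in>{..<n}-{m}. \<mu> m j * (Re (z m) - Re (z j)) = 0"
    by (subst (asm) sum_nonneg_eq_0_iff) auto
  hence allM: "\<And>j. j<n \<Longrightarrow> Re (z j) = M"
    using mu m by (metis DiffI diff_0_eq_0 eq_iff_diff_eq_0 less_numeral_extra(3) lessThan_iff mult_eq_0_iff singletonD)
  have "0 = Re (\<Sum>i<n. z i)" using s by simp
  also have "\<dots> = (\<Sum>i<n. M)" by (simp add: Re_sum allM)
  also have "\<dots> = of_nat n * M" by simp
  finally have "M = 0" using False by simp
  thus ?thesis using allM by simp
qed

lemma lap:
  fixes z :: "nat \<Rightarrow> complex" and \<mu> :: "nat \<Rightarrow> nat \<Rightarrow> real"
  assumes mu: "\<And>i j. i<n \<Longrightarrow> j<n \<Longrightarrow> i\<noteq>j \<Longrightarrow> \<mu> i j > 0"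
    and eq: "\<And>i. i<n \<Longrightarrow> (\<Sum>j\<in>{..<n}-{i}. of_real (\<mu> i j) * (z i - z j)) = 0"
    and s: "(\<Sum>i<n. z i) = 0"
  shows "\<forall>i<n. z i = 0"
proof -
  have r: "\<forall>i<n. Re (z i) = 0" by (rule lapRe[OF mu eq s])
  have eq2: "(\<Sum>j\<in>{..<n}-{i}. of_real (\<mu> i j) * ((- \<i> * z i) - (- \<i> * z j))) = 0" if "i<n" for i
  proof -
    have "(\<Sum>j\<in>{..<n}-{i}. of_real (\<mu> i j) * ((- \<i> * z i) - (- \<i> * z j)))
        = (- \<i>) * (\<Sum>j\<in>{..<n}-{i}. of_real (\<mu> i j) * (z i - z j))"
      by (simp add: sum_distrib_left algebra_simps)
    thus ?thesis using eq[OF that] by simp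
  qed
  have s2: "(\<Sum>i<n. - \<i> * z i) = 0"
    using s by (simp add: sum_distrib_left[symmetric] sum_negf)
  have "\<forall>i<n. Re (- \<i> * z i) = 0" by (rule lapRe[OF mu eq2 s2])
  hence "\<forall>i<n. Im (z i) = 0" by simp
  with r show ?thesis by (simp add: complex_eq_iff)
qed


lemma amat_expand:
  assumes i: "i < n"
  shows "matvec n (Amat d a n) x i =
    (\<Sum>j\<in>{..<n}-{i}. (pder d (a i) - pder d (a j)) / (a i - a j) * (x i - x j))"
proof -
  define c where "c j = (pder d (a i) - pder d (a j)) / (a i - a j)" for j
  have offd: "Amat d a n i j = - c j" if "j \<noteq> i" for j
    using that unfolding Amat_def c_def by (simp add: minus_divide_left)
  have dg: "Amat d a n i i = (\<Sum>j\<in>{..<n}-{i}. c j)"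
    unfolding Amat_def c_def by simp
  have "matvec n (Amat d a n) x i = Amat d a n i i * x i + (\<Sum>j\<in>{..<n}-{i}. Amat d a n i j * x j)"
    using i unfolding matvec_def by (simp add: sum.remove)
  also have "(\<Sum>j\<in>{..<n}-{i}. Amat d a n i j * x j) = (\<Sum>j\<in>{..<n}-{i}. - (c j * x j))"
    by (rule sum.cong[OF refl]) (simp add: offd)
  also have "Amat d a n i i * x i = (\<Sum>j\<in>{..<n}-{i}. c j * x i)"
    by (simp add: dg sum_distrib_right)
  also have "(\<Sum>j\<in>{..<n}-{i}. c j * x i) + (\<Sum>j\<in>{..<n}-{i}. - (c j * x j))
      = (\<Sum>j\<in>{..<n}-{i}. c j * (x i - x j))"
    by (simp add: sum.distrib[symmetric] right_diff_distrib)
  finally show ?thesis unfolding c_def .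
qed

definition xp :: "nat \<Rightarrow> puis" where "xp d = fls_shift (- int d) 1"

lemma xp_nth: "fls_nth (xp d * f) l = fls_nth f (l - int d)"
  by (simp add: xp_def fls_shifted_times_simps)

lemma lead_q:
  assumes d: "d \<ge> 1" and g: "g \<noteq> 0" and sg: "fls_subdegree g \<noteq> 0"
  shows "fls_subdegree (xp d * pder d g / g) = 0 \<and>
         fls_nth (xp d * pder d g / g) 0 = of_int (fls_subdegree g) / of_nat d"
proof -
  define h where "h = xp d * pder d g"
  have hn: "fls_nth h l = of_int l / of_nat d * fls_nth g l" for l
    by (simp add: h_def xp_nth pder_nth)
  have dnz: "(of_nat d :: complex) \<noteq> 0" using d by simp
  have hs: "fls_nth h (fls_subdegree g) \<noteq> 0" using g sg dnz by (simp add: hn)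
  hence hnz: "h \<noteq> 0" by auto
  have subh: "fls_subdegree h = fls_subdegree g"
    by (rule fls_subdegree_eqI[OF hs]) (simp add: hn)
  have sq: "fls_subdegree (h / g) = 0"
    using hnz g subh by (simp add: divide_inverse)
  have "h / g * g = h" using g by simp
  hence "fls_nth h (fls_subdegree (h/g) + fls_subdegree g) =
         fls_nth (h/g) (fls_subdegree (h/g)) * fls_nth g (fls_subdegree g)"
    by (metis fls_times_base)
  hence "fls_nth (h/g) 0 = fls_nth h (fls_subdegree g) / fls_nth g (fls_subdegree g)"
    using sq g by (simp add: field_simps)
  also have "\<dots> = of_int (fls_subdegree g) / of_nat d" using g by (simp add: hn)
  finally show ?thesis using sq by (simp add: h_def)
qed

lemma coeff_mul_low:
  fixes q y :: puis
  assumes sq: "fls_subdegree q = 0" and low: "\<And>l. l < K \<Longrightarrow> fls_nth y l = 0"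
  shows "fls_nth (q * y) K = fls_nth q 0 * fls_nth y K"
proof (cases "y = 0")
  case True thus ?thesis by simp
next
  case False
  have ge: "K \<le> fls_subdegree y" by (rule fls_subdegree_geI[OF False low])
  show ?thesis
  proof (cases "fls_subdegree y = K")
    case True
    thus ?thesis using fls_times_base[of q y] sq by simp
  next
    case False
    hence lt: "K < fls_subdegree q + fls_subdegree y" using ge sq by simp
    have "fls_nth y K = 0" using ge False by simp
    thus ?thesis using fls_times_nth_eq0[OF lt] by simp
  qed
qed

lemma subdeg_pos:
  fixes g :: puis
  assumes "g \<noteq> 0" "\<And>l. l \<le> 0 \<Longrightarrow> fls_nth g l = 0"
  shows "fls_subdegree g \<ge> 1"
  using fls_subdegree_geI[of g 1] assms by auto

lemma keyK:
  fixes a x :: "nat \<Rightarrow> puis"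
  assumes d: "d \<ge> 1"
    and dist: "\<And>i j. i<n \<Longrightarrow> j<n \<Longrightarrow> i\<noteq>j \<Longrightarrow> a i \<noteq> a j"
    and pos: "\<And>i l. i<n \<Longrightarrow> l \<le> 0 \<Longrightarrow> fls_nth (a i) l = 0"
    and sx: "(\<Sum>j<n. x j) = 0"
    and Ax: "\<And>i. i<n \<Longrightarrow> pnu_ge d (matvec n (Amat d a n) x i) s"
    and j0: "j0 < n"
  shows "pnu_ge d (x j0) (s + 1)"
proof (rule ccontr)
  assume nge: "\<not> pnu_ge d (x j0) (s + 1)"
  hence x0: "x j0 \<noteq> 0" by (auto simp: pnu_ge_def)
  have dpos: "(0::rat) < of_nat d" using d by simp
  from nge x0 have "of_int (fls_subdegree (x j0)) / of_nat d < s + 1"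
    by (simp add: pnu_ge_def pnu_def)
  hence lt0: "of_int (fls_subdegree (x j0)) < (s + 1) * of_nat d" using dpos by (simp add: divide_less_eq)
  define Z where "Z = {j. j < n \<and> x j \<noteq> 0}"
  have finZ: "finite ((\<lambda>j. fls_subdegree (x j)) ` Z)" unfolding Z_def by simp
  have neZ: "(\<lambda>j. fls_subdegree (x j)) ` Z \<noteq> {}" using j0 x0 unfolding Z_def by auto
  define K where "K = Min ((\<lambda>j. fls_subdegree (x j)) ` Z)"
  obtain j1 where j1: "j1 \<in> Z" "fls_subdegree (x j1) = K"
    using Min_in[OF finZ neZ] unfolding K_def by auto
  have Kle: "K \<le> fls_subdegree (x j0)" unfolding K_def using finZ j0 x0 Z_def by auto
  have below: "fls_nth (x j) l = 0" if "j < n" "l < K" for j l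
  proof (cases "x j = 0")
    case True thus ?thesis by simp
  next
    case False
    hence "K \<le> fls_subdegree (x j)" unfolding K_def using finZ that Z_def by auto
    thus ?thesis using that by simp
  qed
  have Klt: "of_int K < (s + 1) * of_nat d" using Kle lt0 by linarith
  define ub where "ub j = fls_nth (x j) K" for j
  define \<mu> where "\<mu> i j = real_of_int (fls_subdegree (a i - a j)) / real d" for i j
  have gnz: "a i - a j \<noteq> 0" if "i<n" "j<n" "i\<noteq>j" for i j using dist that by simp
  have gpos: "fls_subdegree (a i - a j) \<ge> 1" if "i<n" "j<n" "i\<noteq>j" for i j
    using gnz[OF that] pos that by (intro subdeg_pos) auto
  have mupos: "\<mu> i j > 0" if "i<n" "j<n" "i\<noteq>j" for i j
    using gpos[OF that] d by (simp add: \<mu>_def)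
  have eq: "(\<Sum>j\<in>{..<n}-{i}. of_real (\<mu> i j) * (ub i - ub j)) = 0" if i: "i < n" for i
  proof -
    let ?S = "{..<n}-{i}"
    let ?q = "\<lambda>j. xp d * pder d (a i - a j) / (a i - a j)"
    have "fls_nth (xp d * matvec n (Amat d a n) x i) K = fls_nth (matvec n (Amat d a n) x i) (K - int d)"
      by (simp add: xp_nth)
    also have "\<dots> = 0"
    proof -
      have "of_int (K - int d) < s * of_nat d" using Klt by (simp add: algebra_simps)
      thus ?thesis using Ax[OF i] by (simp add: pnu_ge_iff[OF d])
    qed
    finally have z: "fls_nth (xp d * matvec n (Amat d a n) x i) K = 0" .
    have "xp d * matvec n (Amat d a n) x i = (\<Sum>j\<in>?S. ?q j * (x i - x j))"
    proof -
      have "xp d * matvec n (Amat d a n) x i = (\<Sum>j\<in>?S. xp d * ((pder d (a i) - pder d (a j)) / (a i - a j) * (x i - x j)))"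
        using i by (simp only: amat_expand sum_distrib_left)
      also have "\<dots> = (\<Sum>j\<in>?S. ?q j * (x i - x j))"
        by (rule sum.cong[OF refl]) (simp only: pder_diff divide_inverse ac_simps)
      finally show ?thesis .
    qed
    hence "fls_nth (xp d * matvec n (Amat d a n) x i) K = (\<Sum>j\<in>?S. fls_nth (?q j * (x i - x j)) K)"
      by (simp add: fls_nth_sum)
    also have "\<dots> = (\<Sum>j\<in>?S. of_real (\<mu> i j) * (ub i - ub j))"
    proof (rule sum.cong[OF refl])
      fix j assume j: "j \<in> ?S"
      have jn: "j < n" "i \<noteq> j" using j by auto
      have L: "fls_subdegree (?q j) = 0 \<and> fls_nth (?q j) 0 = of_int (fls_subdegree (a i - a j)) / of_nat d"
        using lead_q[OF d gnz[OF i jn]] gpos[OF i jn] by simp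
      have low: "\<And>l. l < K \<Longrightarrow> fls_nth (x i - x j) l = 0"
        using below[OF i] below[OF jn(1)] by (simp only: fls_minus_nth) simp
      have "fls_nth (?q j * (x i - x j)) K = fls_nth (?q j) 0 * fls_nth (x i - x j) K"
        by (rule coeff_mul_low[OF conjunct1[OF L] low])
      also have "fls_nth (?q j) 0 = of_real (\<mu> i j)"
        unfolding conjunct2[OF L] \<mu>_def by simp
      also have "fls_nth (x i - x j) K = ub i - ub j"
        unfolding ub_def by (rule fls_minus_nth)
      finally show "fls_nth (?q j * (x i - x j)) K = of_real (\<mu> i j) * (ub i - ub j)" .
    qed
    finally show ?thesis using z by simp
  qed
  have s0: "(\<Sum>j<n. ub j) = 0"
  proof -
    have "(\<Sum>j<n. ub j) = fls_nth (\<Sum>j<n. x j) K" by (simp add: ub_def fls_nth_sum)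
    thus ?thesis using sx by simp
  qed
  have "\<forall>i<n. ub i = 0" by (rule lap[OF mupos eq s0]) auto
  moreover have "ub j1 \<noteq> 0" using j1 unfolding ub_def Z_def by auto
  ultimately show False using j1 unfolding Z_def by auto
qed


lemma pder_one[simp]: "pder d 1 = 0"
  by (simp add: pder_def)

lemma bmat_expand:
  assumes i: "i < n"
  shows "matvec n (Bmat a n) w i = (\<Sum>j\<in>{..<n}-{i}. beta a n i j * (w j - w i))"
proof -
  have "matvec n (Bmat a n) w i = Bmat a n i i * w i + (\<Sum>j\<in>{..<n}-{i}. Bmat a n i j * w j)"
    using i unfolding matvec_def by (simp add: sum.remove)
  also have "(\<Sum>j\<in>{..<n}-{i}. Bmat a n i j * w j) = (\<Sum>j\<in>{..<n}-{i}. beta a n i j * w j)"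
    by (rule sum.cong[OF refl]) (simp add: Bmat_def)
  also have "Bmat a n i i * w i = (\<Sum>j\<in>{..<n}-{i}. - (beta a n i j * w i))"
    by (simp add: Bmat_def sum_distrib_right sum_negf)
  also have "(\<Sum>j\<in>{..<n}-{i}. - (beta a n i j * w i)) + (\<Sum>j\<in>{..<n}-{i}. beta a n i j * w j)
      = (\<Sum>j\<in>{..<n}-{i}. beta a n i j * (w j - w i))"
    by (simp add: sum.distrib[symmetric] right_diff_distrib)
  finally show ?thesis .
qed

context pts
begin

lemma Z_zero:
  assumes i: "i < n"
  shows "Sn a n i (\<lambda>k. 1 / epsv a n k) = 0"
proof -
  have "degree (1::puis poly) < n" using i by simp
  hence "1 = elem a n (coord a n 1)" by (rule lagrange)
  also have "elem a n (coord a n 1) = elem a n (\<lambda>k. 1 / epsv a n k)"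
    by (rule elem_cong) (simp add: coord_def)
  finally have e: "elem a n (\<lambda>k. 1 / epsv a n k) = 1" by simp
  have "0 = poly (pderiv (elem a n (\<lambda>k. 1 / epsv a n k))) (a i)" by (simp add: e)
  also have "\<dots> = epsv a n i * Sn a n i (\<lambda>k. 1 / epsv a n k)" by (rule poly_pderiv_elem[OF i])
  finally show ?thesis using epsv_nz[OF i] by simp
qed

lemma fx_elem:
  assumes n1: "n \<ge> 1"
  shows "pdx d (fpol a n) = elem a n (\<lambda>i. - pder d (a i))"
proof -
  let ?fx = "pdx d (fpol a n)"
  have dle: "degree ?fx \<le> n" using degree_pdx[of d "fpol a n"] degree_fpol by simp
  have cn: "coeff ?fx n = 0" by (simp add: coeff_pdx lead_fpol)
  have deg: "degree ?fx < n"
  proof (rule ccontr)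
    assume "\<not> degree ?fx < n"
    hence "degree ?fx = n" using dle by simp
    hence "?fx \<noteq> 0" using n1 by auto
    hence "coeff ?fx (degree ?fx) \<noteq> 0" by simp
    thus False using cn \<open>degree ?fx = n\<close> by simp
  qed
  have "?fx = elem a n (coord a n ?fx)" by (rule lagrange[OF deg])
  also have "\<dots> = elem a n (\<lambda>i. - pder d (a i))"
  proof (rule elem_cong)
    fix i assume i: "i < n"
    have "poly (pderiv (fpol a n)) (a i) = epsv a n i"
      by (simp add: pderiv_fpol poly_elem[OF i])
    hence "poly ?fx (a i) = - epsv a n i * pder d (a i)"
      by (simp add: chain_rule poly_fpol[OF i])
    thus "coord a n ?fx i = - pder d (a i)" using epsv_nz[OF i] by (simp add: coord_def)
  qed
  finally show ?thesis .
qed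

end


lemma term_id:
  fixes D ei ej pi pj ui uj wi wj :: "'a::field"
  assumes "D \<noteq> 0" "ei \<noteq> 0" "ej \<noteq> 0"
  shows "- pi * ((ui + uj) / D) + ui * ((- pi + - pj) / D) + ((ui * pi + wi / ei) + (uj * pj + wj / ej)) / D
     + (ui * pi + wi / ei) * ((1 + 1) / D) - (wi + wj) / D / ei
   = (pi - pj) / D * (ui - uj) - (- (ei - ej) / (D * ei * ej)) * (wj - wi) + wi * ((1 / ei + 1 / ej) / D)"
  using assms by (simp add: field_simps)

context pts
begin

lemma node_vals:
  fixes u v w :: "nat \<Rightarrow> puis" and d :: nat
  assumes n1: "n \<ge> 1" and i: "i<n"
  defines "Q \<equiv> elem a n u * pdx d (fpol a n) + elem a n v * pderiv (fpol a n) - elem a n w"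
  shows "poly Q (a i) = epsv a n i * (epsv a n i * (v i - u i * pder d (a i)) - w i)"
    and "poly (pderiv Q) (a i) = epsv a n i * (epsv a n i * (- pder d (a i) * Sn a n i u
          + u i * Sn a n i (\<lambda>k. - pder d (a k)) + Sn a n i v + v i * Sn a n i (\<lambda>_. 1)) - Sn a n i w)"
proof -
  have Q: "Q = elem a n u * elem a n (\<lambda>k. - pder d (a k)) + elem a n v * elem a n (\<lambda>_. 1) - elem a n w"
    unfolding Q_def fx_elem[OF n1] pderiv_fpol ..
  show "poly Q (a i) = epsv a n i * (epsv a n i * (v i - u i * pder d (a i)) - w i)"
    unfolding Q by (simp add: poly_elem[OF i] algebra_simps)
  show "poly (pderiv Q) (a i) = epsv a n i * (epsv a n i * (- pder d (a i) * Sn a n i u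
          + u i * Sn a n i (\<lambda>k. - pder d (a k)) + Sn a n i v + v i * Sn a n i (\<lambda>_. 1)) - Sn a n i w)"
    unfolding Q by (simp add: pderiv_mult pderiv_diff pderiv_add poly_elem[OF i] poly_pderiv_elem[OF i] algebra_simps)
qed

lemma qprime_formula:
  assumes i: "i<n"
    and vdef: "\<And>j. j<n \<Longrightarrow> v j = u j * pder d (a j) + w j / epsv a n j"
  shows "- pder d (a i) * Sn a n i u + u i * Sn a n i (\<lambda>k. - pder d (a k)) + Sn a n i v
          + v i * Sn a n i (\<lambda>_. 1) - Sn a n i w / epsv a n i
       = matvec n (Amat d a n) u i - matvec n (Bmat a n) w i"
proof -
  let ?S = "{..<n}-{i}"
  let ?D = "\<lambda>j. a i - a j"
  let ?e = "epsv a n"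
  let ?p = "\<lambda>j. pder d (a j)"
  have L: "- ?p i * Sn a n i u + u i * Sn a n i (\<lambda>k. - ?p k) + Sn a n i v
          + v i * Sn a n i (\<lambda>_. 1) - Sn a n i w / ?e i
      = (\<Sum>j\<in>?S. - ?p i * ((u i + u j) / ?D j) + u i * ((- ?p i + - ?p j) / ?D j)
          + (v i + v j) / ?D j + v i * ((1 + 1) / ?D j) - (w i + w j) / ?D j / ?e i)"
    by (simp add: Sn_def sum_distrib_left sum_divide_distrib sum.distrib sum_subtractf sum_negf)
  have R: "matvec n (Amat d a n) u i - matvec n (Bmat a n) w i
      = (\<Sum>j\<in>?S. (?p i - ?p j) / ?D j * (u i - u j) - beta a n i j * (w j - w i)
          + w i * ((1 / ?e i + 1 / ?e j) / ?D j))"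
  proof -
    have "matvec n (Amat d a n) u i - matvec n (Bmat a n) w i
        = matvec n (Amat d a n) u i - matvec n (Bmat a n) w i + w i * Sn a n i (\<lambda>k. 1 / ?e k)"
      by (simp add: Z_zero[OF i])
    also have "\<dots> = (\<Sum>j\<in>?S. (?p i - ?p j) / ?D j * (u i - u j) - beta a n i j * (w j - w i)
          + w i * ((1 / ?e i + 1 / ?e j) / ?D j))"
      by (simp add: amat_expand[OF i] bmat_expand[OF i] Sn_def sum_distrib_left sum.distrib sum_subtractf)
    finally show ?thesis .
  qed
  show ?thesis unfolding L R
  proof (rule sum.cong[OF refl])
    fix j assume j: "j \<in> ?S"
    have jn: "j < n" "j \<noteq> i" using j by auto
    have D: "?D j \<noteq> 0" using dist[OF i jn(1)] jn by auto
    have ei: "?e i \<noteq> 0" by (rule epsv_nz[OF i])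
    have ej: "?e j \<noteq> 0" by (rule epsv_nz[OF jn(1)])
    show "- ?p i * ((u i + u j) / ?D j) + u i * ((- ?p i + - ?p j) / ?D j)
          + (v i + v j) / ?D j + v i * ((1 + 1) / ?D j) - (w i + w j) / ?D j / ?e i
        = (?p i - ?p j) / ?D j * (u i - u j) - beta a n i j * (w j - w i)
          + w i * ((1 / ?e i + 1 / ?e j) / ?D j)"
      unfolding vdef[OF i] vdef[OF jn(1)] beta_def
      by (rule term_id[OF D ei ej])
  qed
qed

end


lemma solve_inj:
  fixes F :: "nat \<Rightarrow> nat \<Rightarrow> 'a::field"
  assumes inj: "\<And>y. (\<And>i. i<n \<Longrightarrow> (\<Sum>j<n. F i j * y j) = 0) \<Longrightarrow> (\<forall>j<n. y j = 0)"
  shows "\<exists>y. \<forall>i<n. (\<Sum>j<n. F i j * y j) = b i"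
proof -
  define M where "M = mat n n (\<lambda>(i,j). F i j)"
  have Mc: "M \<in> carrier_mat n n" by (simp add: M_def)
  have Mv: "(M *\<^sub>v v) $ i = (\<Sum>j<n. F i j * v $ j)" if "i < n" "v \<in> carrier_vec n" for i v
    using that by (simp add: M_def index_mult_mat_vec scalar_prod_def row_def atLeast0LessThan)
  have "det M \<noteq> 0"
  proof
    assume "det M = 0"
    then obtain v where v: "v \<in> carrier_vec n" "v \<noteq> 0\<^sub>v n" "M *\<^sub>v v = 0\<^sub>v n"
      using det_0_iff_vec_prod_zero_field[OF Mc] by auto
    have "\<forall>j<n. v $ j = 0"
    proof (rule inj)
      fix i assume i: "i < n"
      have "(M *\<^sub>v v) $ i = 0" using v(3) i by simp
      thus "(\<Sum>j<n. F i j * v $ j) = 0" using Mv[OF i v(1)] by simp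
    qed
    hence "v = 0\<^sub>v n" using v(1) by (auto simp: vec_eq_iff)
    thus False using v(2) by simp
  qed
  hence "M \<in> Units (ring_mat TYPE('a) n ())" by (rule det_non_zero_imp_unit[OF Mc])
  then obtain N where N: "N \<in> carrier_mat n n" "M * N = 1\<^sub>m n"
    unfolding Units_def ring_mat_def by auto
  define y where "y = N *\<^sub>v vec n b"
  have yc: "y \<in> carrier_vec n" using N(1) by (simp add: y_def)
  have "M *\<^sub>v y = vec n b"
    unfolding y_def using N Mc by (simp add: assoc_mult_mat_vec[symmetric])
  hence "\<forall>i<n. (\<Sum>j<n. F i j * y $ j) = b i"
    using Mv yc by (metis index_vec)
  thus ?thesis by blast
qed

lemma colsum_A:
  shows "(\<Sum>i<n. matvec n (Amat d a n) x i) = 0"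
proof -
  have "(\<Sum>i<n. matvec n (Amat d a n) x i) = (\<Sum>j<n. x j * (\<Sum>i<n. Amat d a n i j))"
    unfolding matvec_def by (subst sum.swap) (simp add: sum_distrib_left mult.commute)
  also have "\<dots> = 0"
  proof (rule sum.neutral, intro ballI)
    fix j assume j: "j \<in> {..<n}"
    have "(\<Sum>i<n. Amat d a n i j) = Amat d a n j j + (\<Sum>i\<in>{..<n}-{j}. Amat d a n i j)"
      using j by (simp add: sum.remove)
    also have "(\<Sum>i\<in>{..<n}-{j}. Amat d a n i j) = (\<Sum>i\<in>{..<n}-{j}. - ((pder d (a j) - pder d (a i)) / (a j - a i)))"
    proof (rule sum.cong[OF refl])
      fix i assume "i \<in> {..<n}-{j}"
      hence ij: "i \<noteq> j" by auto
      have e1: "a j - a i = - (a i - a j)" "pder d (a j) - pder d (a i) = - (pder d (a i) - pder d (a j))"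
        by simp_all
      show "Amat d a n i j = - ((pder d (a j) - pder d (a i)) / (a j - a i))"
        unfolding Amat_def using ij by (simp only: e1 minus_divide_divide minus_divide_left if_False)
    qed
    also have "Amat d a n j j + \<dots> = 0" by (simp add: Amat_def sum_negf)
    finally show "x j * (\<Sum>i<n. Amat d a n i j) = 0" by simp
  qed
  finally show ?thesis .
qed

lemma colsum_B:
  shows "(\<Sum>i<n. matvec n (Bmat a n) x i) = 0"
proof -
  have "(\<Sum>i<n. matvec n (Bmat a n) x i) = (\<Sum>j<n. x j * (\<Sum>i<n. Bmat a n i j))"
    unfolding matvec_def by (subst sum.swap) (simp add: sum_distrib_left mult.commute)
  also have "\<dots> = 0"
  proof (rule sum.neutral, intro ballI)
    fix j assume j: "j \<in> {..<n}"
    have "(\<Sum>i<n. Bmat a n i j) = Bmat a n j j + (\<Sum>i\<in>{..<n}-{j}. Bmat a n i j)"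
      using j by (simp add: sum.remove)
    also have "(\<Sum>i\<in>{..<n}-{j}. Bmat a n i j) = (\<Sum>i\<in>{..<n}-{j}. beta a n j i)"
    proof (rule sum.cong[OF refl])
      fix i assume "i \<in> {..<n}-{j}"
      hence "i \<noteq> j" by auto
      moreover have "beta a n i j = beta a n j i"
      proof -
        have "(a i - a j) * epsv a n i * epsv a n j = - ((a j - a i) * epsv a n j * epsv a n i)"
          by (simp add: algebra_simps)
        moreover have "epsv a n i - epsv a n j = - (epsv a n j - epsv a n i)" by simp
        ultimately show ?thesis unfolding beta_def by (metis minus_divide_divide)
      qed
      ultimately show "Bmat a n i j = beta a n j i" by (simp add: Bmat_def)
    qed
    also have "Bmat a n j j + \<dots> = 0" by (simp add: Bmat_def)
    finally show "x j * (\<Sum>i<n. Bmat a n i j) = 0" by simp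
  qed
  finally show ?thesis .
qed

lemma inj_A:
  fixes a x :: "nat \<Rightarrow> puis"
  assumes d: "d \<ge> 1"
    and dist: "\<And>i j. i<n \<Longrightarrow> j<n \<Longrightarrow> i\<noteq>j \<Longrightarrow> a i \<noteq> a j"
    and pos: "\<And>i l. i<n \<Longrightarrow> l \<le> 0 \<Longrightarrow> fls_nth (a i) l = 0"
    and sx: "(\<Sum>j<n. x j) = 0"
    and Ax: "\<And>i. i<n \<Longrightarrow> matvec n (Amat d a n) x i = 0"
    and j0: "j0 < n"
  shows "x j0 = 0"
proof (rule ccontr)
  assume nz: "x j0 \<noteq> 0"
  have H: "\<And>i. i<n \<Longrightarrow> pnu_ge d (matvec n (Amat d a n) x i) (pnu d (x j0))"
    using Ax by (simp add: pnu_ge_def)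
  have "pnu_ge d (x j0) (pnu d (x j0) + 1)"
    by (rule keyK) (use d dist pos sx H j0 in auto)
  thus False using nz by (simp add: pnu_ge_def)
qed

lemma exist_A:
  fixes a :: "nat \<Rightarrow> puis"
  assumes d: "d \<ge> 1"
    and dist: "\<And>i j. i<n \<Longrightarrow> j<n \<Longrightarrow> i\<noteq>j \<Longrightarrow> a i \<noteq> a j"
    and pos: "\<And>i l. i<n \<Longrightarrow> l \<le> 0 \<Longrightarrow> fls_nth (a i) l = 0"
    and n1: "n \<ge> 1"
    and sb: "(\<Sum>i<n. b i) = 0"
  shows "\<exists>x. (\<Sum>j<n. x j) = 0 \<and> (\<forall>i<n. matvec n (Amat d a n) x i = b i)"
proof -
  have ex: "\<exists>y. \<forall>i<n. (\<Sum>j<n. (Amat d a n i j + 1) * y j) = b i"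
  proof (rule solve_inj)
    fix y assume H: "\<And>i. i<n \<Longrightarrow> (\<Sum>j<n. (Amat d a n i j + 1) * y j) = 0"
    have e: "matvec n (Amat d a n) y i + (\<Sum>j<n. y j) = 0" if "i < n" for i
      using H[OF that] by (simp add: matvec_def distrib_right sum.distrib)
    have "0 = (\<Sum>i<n. matvec n (Amat d a n) y i + (\<Sum>j<n. y j))" using e by simp
    also have "\<dots> = of_nat n * (\<Sum>j<n. y j)" by (simp add: sum.distrib colsum_A)
    finally have s0: "(\<Sum>j<n. y j) = 0" using n1 by simp
    have mv: "\<And>i. i<n \<Longrightarrow> matvec n (Amat d a n) y i = 0" using e s0 by simp
    show "\<forall>j<n. y j = 0"
    proof (intro allI impI)
      fix j
      assume j: "j < n"
      show "y j = 0" by (rule inj_A[where x=y]) (use d dist pos s0 mv j in auto)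
    qed
  qed
  then obtain y where y: "\<forall>i<n. (\<Sum>j<n. (Amat d a n i j + 1) * y j) = b i" by blast
  have e: "matvec n (Amat d a n) y i + (\<Sum>j<n. y j) = b i" if "i < n" for i
    using y that by (simp add: matvec_def distrib_right sum.distrib)
  have "(\<Sum>i<n. b i) = (\<Sum>i<n. matvec n (Amat d a n) y i + (\<Sum>j<n. y j))" using e by simp
  also have "\<dots> = of_nat n * (\<Sum>j<n. y j)" by (simp add: sum.distrib colsum_A)
  finally have s: "(\<Sum>j<n. y j) = 0" using n1 sb by simp
  thus ?thesis using e by auto
qed


lemma coeff_mult_top:
  fixes p q :: "'a::comm_semiring_0 poly"
  assumes "degree p \<le> i" "degree q \<le> j"
  shows "coeff (p * q) (i + j) = coeff p i * coeff q j"
proof -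
  have "coeff (p * q) (i + j) = (\<Sum>k\<le>i+j. coeff p k * coeff q (i + j - k))" by (rule coeff_mult)
  also have "\<dots> = (\<Sum>k\<le>i+j. if k = i then coeff p i * coeff q j else 0)"
  proof (rule sum.cong[OF refl])
    fix k assume "k \<in> {..i+j}"
    show "coeff p k * coeff q (i + j - k) = (if k = i then coeff p i * coeff q j else 0)"
    proof (cases "k = i")
      case True thus ?thesis by simp
    next
      case False
      show ?thesis
      proof (cases "k < i")
        case True
        hence "degree q < i + j - k" using assms by linarith
        thus ?thesis using False by (simp add: coeff_eq_0)
      next
        case False2: False
        hence "degree p < k" using assms False by linarith
        thus ?thesis using False by (simp add: coeff_eq_0)
      qed
    qed
  qed
  also have "\<dots> = coeff p i * coeff q j" by simp
  finally show ?thesis .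
qed

lemma aux_div1:
  fixes e X S :: "'a::field"
  shows "e \<noteq> 0 \<Longrightarrow> e * (e * X - S) = 0 \<Longrightarrow> X - S / e = 0"
  by (simp add: field_simps)

lemma aux_div2:
  fixes e X S :: "'a::field"
  shows "e \<noteq> 0 \<Longrightarrow> X - S / e = 0 \<Longrightarrow> e * (e * X - S) = 0"
  by (simp add: field_simps)

lemma aux_div3:
  fixes e v up w :: "'a::field"
  assumes "e \<noteq> 0" "e * (e * (v - up) - w) = 0"
  shows "v = up + w / e"
proof -
  have "e * (v - up) - w = 0" using assms by simp
  thus ?thesis using assms(1) by (simp add: field_simps)
qed

context pts
begin

lemma char_iff:
  fixes d :: nat and u v w :: "puis poly"
  assumes n2: "n \<ge> 2" and dw: "degree w < n"
  shows "(inF a n u \<and> inF a n v \<and> u * pdx d (fpol a n) + v * pderiv (fpol a n) = w) \<longleftrightarrow>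
     (inF a n u
      \<and> (\<forall>i<n. matvec n (Amat d a n) (coord a n u) i = matvec n (Bmat a n) (coord a n w) i)
      \<and> v = (\<Sum>i<n. smult (coord a n u i * pder d (a i) + coord a n w i / epsv a n i) (eps a n i)))"
  (is "?L \<longleftrightarrow> ?R")
proof -
  have n1: "n \<ge> 1" using n2 by simp
  let ?u = "coord a n u" and ?w = "coord a n w"
  define vf where "vf i = ?u i * pder d (a i) + ?w i / epsv a n i" for i
  have vsum: "(\<Sum>i<n. smult (coord a n u i * pder d (a i) + coord a n w i / epsv a n i) (eps a n i)) = elem a n vf"
    by (simp add: Defs.elem_def vf_def)
  have wE: "w = elem a n ?w" by (rule lagrange[OF dw])
  let ?fx = "pdx d (fpol a n)" and ?fy = "pderiv (fpol a n)"
  show ?thesis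
  proof
    assume L: ?L
    hence uF: "inF a n u" and vF: "inF a n v" and eq: "u * ?fx + v * ?fy = w" by auto
    let ?v = "coord a n v"
    have uE: "u = elem a n ?u" using uF by (intro lagrange) (simp add: inF_def inE_def)
    have vE: "v = elem a n ?v" using vF by (intro lagrange) (simp add: inF_def inE_def)
    define Q where "Q = elem a n ?u * ?fx + elem a n ?v * ?fy - elem a n ?w"
    have Q0: "Q = 0" unfolding Q_def using eq uE[symmetric] vE[symmetric] wE[symmetric] by simp
    have vv: "?v i = vf i" if i: "i < n" for i
    proof -
      have "epsv a n i * (epsv a n i * (?v i - ?u i * pder d (a i)) - ?w i) = 0"
      proof -
        have "poly Q (a i) = epsv a n i * (epsv a n i * (?v i - ?u i * pder d (a i)) - ?w i)"
          unfolding Q_def by (rule node_vals(1)[OF n1 i])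
        thus ?thesis using Q0 by (metis poly_0)
      qed
      thus ?thesis unfolding vf_def by (rule aux_div3[OF epsv_nz[OF i]])
    qed
    have AB: "matvec n (Amat d a n) ?u i = matvec n (Bmat a n) ?w i" if i: "i < n" for i
    proof -
      let ?X = "- pder d (a i) * Sn a n i ?u + ?u i * Sn a n i (\<lambda>k. - pder d (a k)) + Sn a n i ?v
          + ?v i * Sn a n i (\<lambda>_. 1)"
      have "epsv a n i * (epsv a n i * ?X - Sn a n i ?w) = 0"
      proof -
        have "poly (pderiv Q) (a i) = epsv a n i * (epsv a n i * ?X - Sn a n i ?w)"
          unfolding Q_def by (rule node_vals(2)[OF n1 i])
        thus ?thesis using Q0 by (metis poly_0 pderiv_0)
      qed
      hence "?X - Sn a n i ?w / epsv a n i = 0" by (rule aux_div1[OF epsv_nz[OF i]])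
      moreover have "?X - Sn a n i ?w / epsv a n i = matvec n (Amat d a n) ?u i - matvec n (Bmat a n) ?w i"
        by (rule qprime_formula[OF i]) (simp add: vv vf_def)
      ultimately show ?thesis by simp
    qed
    have "elem a n ?v = elem a n vf" by (rule elem_cong) (simp add: vv)
    with vE have "v = elem a n vf" by (rule trans)
    thus ?R using uF AB vsum by simp
  next
    assume R: ?R
    hence uF: "inF a n u" and AB: "\<forall>i<n. matvec n (Amat d a n) ?u i = matvec n (Bmat a n) ?w i"
      and vdef: "v = elem a n vf" using vsum by auto
    have uE: "u = elem a n ?u" using uF by (intro lagrange) (simp add: inF_def inE_def)
    define Q where "Q = elem a n ?u * ?fx + elem a n vf * ?fy - elem a n ?w"
    have Qeq: "Q = u * ?fx + v * ?fy - w" unfolding Q_def using uE[symmetric] vdef[symmetric] wE[symmetric] by simp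
    have r1: "poly Q (a i) = 0" if i: "i < n" for i
    proof -
      have "poly Q (a i) = epsv a n i * (epsv a n i * (vf i - ?u i * pder d (a i)) - ?w i)"
        unfolding Q_def by (rule node_vals(1)[OF n1 i])
      also have "\<dots> = 0" using epsv_nz[OF i] by (simp add: vf_def)
      finally show ?thesis .
    qed
    have r2: "poly (pderiv Q) (a i) = 0" if i: "i < n" for i
    proof -
      let ?X = "- pder d (a i) * Sn a n i ?u + ?u i * Sn a n i (\<lambda>k. - pder d (a k)) + Sn a n i vf
          + vf i * Sn a n i (\<lambda>_. 1)"
      have "?X - Sn a n i ?w / epsv a n i = matvec n (Amat d a n) ?u i - matvec n (Bmat a n) ?w i"
        by (rule qprime_formula[OF i]) (simp add: vf_def)
      hence "?X - Sn a n i ?w / epsv a n i = 0" using AB i by simp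
      hence "epsv a n i * (epsv a n i * ?X - Sn a n i ?w) = 0" by (rule aux_div2[OF epsv_nz[OF i]])
      have "poly (pderiv Q) (a i) = epsv a n i * (epsv a n i * ?X - Sn a n i ?w)"
        unfolding Q_def by (rule node_vals(2)[OF n1 i])
      also have "\<dots> = 0" by fact
      finally show ?thesis .
    qed
    have dfx: "degree ?fx \<le> n - 1" unfolding fx_elem[OF n1] by (rule degree_elem)
    have dfy: "degree ?fy \<le> n - 1" unfolding pderiv_fpol by (rule degree_elem)
    have du: "degree u \<le> n - 1" using uF unfolding inF_def inE_def by linarith
    have dv: "degree v \<le> n - 1" unfolding vdef by (rule degree_elem)
    have "degree Q < 2 * n"
    proof -
      have "degree (u * ?fx) \<le> 2 * n - 2" using degree_mult_le[of u ?fx] du dfx by linarith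
      moreover have "degree (v * ?fy) \<le> 2 * n - 2" using degree_mult_le[of v ?fy] dv dfy by linarith
      ultimately have "degree (u * ?fx + v * ?fy) \<le> 2 * n - 2" by (intro degree_add_le)
      moreover have "degree w \<le> 2 * n - 2" using dw n2 by linarith
      ultimately have "degree Q \<le> 2 * n - 2" unfolding Qeq by (intro degree_diff_le)
      thus ?thesis using n2 by linarith
    qed
    hence "Q = 0"
      using zero_crit[where k=2 and p=Q, OF dist] root_dvd2[OF r1 r2] by (simp add: mult.commute)
    hence eq: "u * ?fx + v * ?fy = w" using Qeq by simp
    have vF: "inF a n v"
    proof -
      have dvn: "degree v < n" using dv n2 by linarith
      have cu: "coeff u (n - 1) = 0"
        using uF sum_coord[of u] by (simp add: inF_def inE_def)
      have du2: "degree u \<le> n - 2"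
      proof (rule ccontr)
        assume "\<not> degree u \<le> n - 2"
        hence "degree u = n - 1" using du by linarith
        moreover hence "u \<noteq> 0" using n2 by auto
        ultimately show False using cu by (metis leading_coeff_0_iff)
      qed
      have "coeff (u * ?fx) (2 * n - 2) = 0"
      proof (rule coeff_eq_0)
        show "degree (u * ?fx) < 2 * n - 2" using degree_mult_le[of u ?fx] du2 dfx n2 by linarith
      qed
      moreover have "coeff w (2 * n - 2) = 0" using dw n2 by (intro coeff_eq_0) linarith
      moreover have "coeff (v * ?fy) (2 * n - 2) = coeff v (n - 1) * coeff ?fy (n - 1)"
      proof -
        have e: "2 * n - 2 = (n - 1) + (n - 1)" using n2 by simp
        show ?thesis unfolding e by (rule coeff_mult_top[OF dv dfy])
      qed
      moreover have "coeff ?fy (n - 1) = of_nat n" unfolding pderiv_fpol coeff_elem by simp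
      ultimately have "coeff v (n - 1) * of_nat n = 0"
        using arg_cong[OF eq, of "\<lambda>p. coeff p (2 * n - 2)"] by simp
      hence "coeff v (n - 1) = 0" using n2 by simp
      thus ?thesis using dvn sum_coord[OF dvn] by (simp add: inF_def inE_def)
    qed
    show ?L using uF vF eq by simp
  qed
qed

end


lemma term_g1:
  fixes D ei ej pi pj ui uj wi wj :: "'a::field"
  assumes "D \<noteq> 0" "ei \<noteq> 0" "ej \<noteq> 0"
  shows "ui * ((- pi + - pj) / D) + ui * ((1 + 1) / D * pi) - pi * ((ui + uj) / D)
      + ((ui * pi + wi / ei) + (uj * pj + wj / ej)) / D
    = (pi - pj) / D * (ui - uj) + (wi / ei + wj / ej) / D"
  using assms by (simp add: field_simps)
lemma term_g2:
  fixes D ei ej wi wj :: "'a::field"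
  assumes "D \<noteq> 0" "ei \<noteq> 0" "ej \<noteq> 0"
  shows "- (ei - ej) / (D * ei * ej) * (wj - wi) + (wi / ei + wj / ej) / D = (wi / ej + wj / ei) / D"
  using assms by (simp add: field_simps)

context pts
begin

lemma pder_epsv:
  assumes n1: "n \<ge> 1" and i: "i < n"
  shows "pder d (epsv a n i) = epsv a n i * (Sn a n i (\<lambda>k. - pder d (a k)) + Sn a n i (\<lambda>_. 1) * pder d (a i))"
proof -
  let ?fy = "elem a n (\<lambda>_. 1)"
  have e: "poly ?fy (a i) = epsv a n i" by (simp add: poly_elem[OF i])
  have "pdx d ?fy = pderiv (elem a n (\<lambda>k. - pder d (a k)))"
    unfolding pderiv_fpol[symmetric] pdx_pderiv fx_elem[OF n1] ..
  hence "poly (pdx d ?fy) (a i) = epsv a n i * Sn a n i (\<lambda>k. - pder d (a k))"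
    by (simp add: poly_pderiv_elem[OF i])
  moreover have "poly (pdx d ?fy) (a i) = pder d (epsv a n i) - epsv a n i * Sn a n i (\<lambda>_. 1) * pder d (a i)"
    by (simp add: chain_rule e poly_pderiv_elem[OF i])
  ultimately show ?thesis by (simp add: algebra_simps)
qed

lemma g_coord:
  fixes d :: nat and ut wt :: "nat \<Rightarrow> puis"
  assumes n1: "n \<ge> 1" and i: "i < n"
    and AB: "matvec n (Amat d a n) ut i = matvec n (Bmat a n) wt i"
  defines "vf \<equiv> \<lambda>j. ut j * pder d (a j) + wt j / epsv a n j"
  shows "poly (pdx d (elem a n ut) + pderiv (elem a n vf)) (a i) / epsv a n i
     = pder d (ut i) + (\<Sum>j\<in>{..<n}-{i}. (wt i / epsv a n j + wt j / epsv a n i) / (a i - a j))"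
proof -
  let ?S = "{..<n}-{i}"
  let ?D = "\<lambda>j. a i - a j"
  let ?e = "epsv a n"
  let ?p = "\<lambda>j. pder d (a j)"
  have ei: "?e i \<noteq> 0" by (rule epsv_nz[OF i])
  have P1: "poly (pdx d (elem a n ut)) (a i) = pder d (ut i * ?e i) - ?e i * Sn a n i ut * ?p i"
    by (simp add: chain_rule poly_elem[OF i] poly_pderiv_elem[OF i])
  have P3: "poly (pderiv (elem a n vf)) (a i) = ?e i * Sn a n i vf"
    by (rule poly_pderiv_elem[OF i])
  have "poly (pdx d (elem a n ut) + pderiv (elem a n vf)) (a i) / ?e i
      = pder d (ut i) + (ut i * (Sn a n i (\<lambda>k. - ?p k) + Sn a n i (\<lambda>_. 1) * ?p i) - ?p i * Sn a n i ut + Sn a n i vf)"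
    using ei by (simp add: P1 P3 pder_mult pder_epsv[OF n1 i] field_simps)
  also have "ut i * (Sn a n i (\<lambda>k. - ?p k) + Sn a n i (\<lambda>_. 1) * ?p i) - ?p i * Sn a n i ut + Sn a n i vf
      = (\<Sum>j\<in>?S. ut i * ((- ?p i + - ?p j) / ?D j) + ut i * ((1 + 1) / ?D j * ?p i) - ?p i * ((ut i + ut j) / ?D j)
          + (vf i + vf j) / ?D j)"
    by (simp add: Sn_def sum_distrib_left sum_distrib_right sum.distrib sum_subtractf sum_negf distrib_left)
  also have "\<dots> = (\<Sum>j\<in>?S. (?p i - ?p j) / ?D j * (ut i - ut j) + (wt i / ?e i + wt j / ?e j) / ?D j)"
  proof (rule sum.cong[OF refl])
    fix j assume j: "j \<in> ?S"
    have jn: "j < n" "j \<noteq> i" using j by auto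
    have D: "?D j \<noteq> 0" using dist[OF i jn(1)] jn by auto
    have ej: "?e j \<noteq> 0" by (rule epsv_nz[OF jn(1)])
    show "ut i * ((- ?p i + - ?p j) / ?D j) + ut i * ((1 + 1) / ?D j * ?p i) - ?p i * ((ut i + ut j) / ?D j)
          + (vf i + vf j) / ?D j = (?p i - ?p j) / ?D j * (ut i - ut j) + (wt i / ?e i + wt j / ?e j) / ?D j"
      unfolding vf_def by (rule term_g1[OF D ei ej])
  qed
  also have "\<dots> = matvec n (Amat d a n) ut i + (\<Sum>j\<in>?S. (wt i / ?e i + wt j / ?e j) / ?D j)"
    by (simp add: amat_expand[OF i] sum.distrib)
  also have "\<dots> = (\<Sum>j\<in>?S. beta a n i j * (wt j - wt i) + (wt i / ?e i + wt j / ?e j) / ?D j)"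
    by (simp add: AB bmat_expand[OF i] sum.distrib)
  also have "\<dots> = (\<Sum>j\<in>?S. (wt i / ?e j + wt j / ?e i) / ?D j)"
  proof (rule sum.cong[OF refl])
    fix j assume j: "j \<in> ?S"
    have jn: "j < n" "j \<noteq> i" using j by auto
    have D: "?D j \<noteq> 0" using dist[OF i jn(1)] jn by auto
    have ej: "?e j \<noteq> 0" by (rule epsv_nz[OF jn(1)])
    show "beta a n i j * (wt j - wt i) + (wt i / ?e i + wt j / ?e j) / ?D j = (wt i / ?e j + wt j / ?e i) / ?D j"
      unfolding beta_def by (rule term_g2[OF D ei ej])
  qed
  finally show ?thesis .
qed

end


locale vset = pts +
  fixes d :: nat
  assumes d: "d \<ge> 1" and n2: "n \<ge> 2"
    and pos: "\<And>i. i < n \<Longrightarrow> a i \<noteq> 0 \<Longrightarrow> pnu d (a i) > 0"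
begin

lemma n1: "n \<ge> 1" using n2 by simp

lemma pos': assumes i: "i < n" and l: "l \<le> 0" shows "fls_nth (a i) l = 0"
proof (cases "a i = 0")
  case True thus ?thesis by simp
next
  case False
  have "0 < of_int (fls_subdegree (a i)) / (of_nat d :: rat)" using pos[OF i False] by (simp add: pnu_def)
  hence "0 < fls_subdegree (a i)" using d by (simp add: zero_less_divide_iff)
  thus ?thesis using l by simp
qed

lemma pi_fin: "finite {mi d a n i + mij d a i j | i j. i < n \<and> j < n \<and> i \<noteq> j}"
proof -
  have "{mi d a n i + mij d a i j | i j. i < n \<and> j < n \<and> i \<noteq> j}
      \<subseteq> (\<lambda>(i,j). mi d a n i + mij d a i j) ` ({..<n} \<times> {..<n})" by auto
  thus ?thesis by (rule finite_subset) simp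
qed

lemma pi_ge: "i < n \<Longrightarrow> j < n \<Longrightarrow> i \<noteq> j \<Longrightarrow> mi d a n i + mij d a i j \<le> piinv d a n"
  unfolding piinv_def by (rule Max_ge[OF pi_fin]) blast

lemma delta_fin: "finite {pnu d (a i) | i. i < n \<and> a i \<noteq> 0}"
proof -
  have "{pnu d (a i) | i. i < n \<and> a i \<noteq> 0} \<subseteq> (\<lambda>i. pnu d (a i)) ` {..<n}" by auto
  thus ?thesis by (rule finite_subset) simp
qed

lemma ge_delta: "i < n \<Longrightarrow> pnu_ge d (a i) (deltainv d a n)"
proof (cases "a i = 0")
  case True thus ?thesis by simp
next
  case False
  assume i: "i < n"
  have "deltainv d a n \<le> pnu d (a i)"
    unfolding deltainv_def by (rule Min_le[OF delta_fin]) (use i False in blast)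
  thus ?thesis by (simp add: pnu_ge_def)
qed

lemma mi_epsv: "i < n \<Longrightarrow> pnu d (epsv a n i) = mi d a n i"
  unfolding epsv_def mi_def mij_def using dist by (subst pnu_prod) auto

lemma mij_sym: "mij d a i j = mij d a j i"
  unfolding mij_def by (rule pnu_diff_sym)

lemma delta_le_mij:
  assumes "i < n" "j < n" "i \<noteq> j"
  shows "deltainv d a n \<le> mij d a i j"
proof -
  have "pnu_ge d (a i - a j) (deltainv d a n)"
    using ge_delta assms d by (intro pnu_ge_diff) auto
  moreover have "a i - a j \<noteq> 0" using dist assms by auto
  ultimately show ?thesis by (simp add: pnu_ge_def mij_def)
qed

lemma epsv_ge: "i < n \<Longrightarrow> pnu_ge d (epsv a n i) (mi d a n i)"
  using pnu_ge_self[of d "epsv a n i"] mi_epsv by simp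

lemma beta_bound:
  assumes i: "i < n" and j: "j < n" and ij: "i \<noteq> j"
  shows "pnu_ge d (beta a n i j) (- piinv d a n)"
proof -
  let ?mi = "mi d a n i" and ?mj = "mi d a n j" and ?m = "mij d a i j"
  have n1': "pnu_ge d (epsv a n i) (min ?mi ?mj)" by (rule pnu_ge_mono[OF d epsv_ge[OF i]]) simp
  have n2': "pnu_ge d (epsv a n j) (min ?mi ?mj)" by (rule pnu_ge_mono[OF d epsv_ge[OF j]]) simp
  have num: "pnu_ge d (- (epsv a n i - epsv a n j)) (min ?mi ?mj)"
    by (rule pnu_ge_uminus[OF d pnu_ge_diff[OF d n1' n2']])
  have Dnz: "a i - a j \<noteq> 0" using dist i j ij by auto
  have ei: "epsv a n i \<noteq> 0" by (rule epsv_nz[OF i])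
  have ej: "epsv a n j \<noteq> 0" by (rule epsv_nz[OF j])
  have den: "pnu d ((a i - a j) * epsv a n i * epsv a n j) = ?m + ?mi + ?mj"
    using Dnz ei ej by (simp add: pnu_mult mi_epsv[OF i] mi_epsv[OF j] mij_def)
  have "pnu_ge d (beta a n i j) (min ?mi ?mj - (?m + ?mi + ?mj))"
    unfolding beta_def using pnu_ge_divide[OF num, of "(a i - a j) * epsv a n i * epsv a n j"] Dnz ei ej den
    by simp
  moreover have "- piinv d a n \<le> min ?mi ?mj - (?m + ?mi + ?mj)"
    using pi_ge[OF i j ij] pi_ge[OF j i] ij mij_sym[of i j] by (auto simp: min_def)
  ultimately show ?thesis by (rule pnu_ge_mono[OF d])
qed

lemma B_bound:
  assumes i: "i < n" and w: "\<And>j. j < n \<Longrightarrow> pnu_ge d (wt j) r"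
  shows "pnu_ge d (matvec n (Bmat a n) wt i) (r - piinv d a n)"
proof -
  have "pnu_ge d (\<Sum>j\<in>{..<n}-{i}. beta a n i j * (wt j - wt i)) (- piinv d a n + r)"
  proof (rule pnu_ge_sum[OF d])
    fix j assume "j \<in> {..<n}-{i}"
    hence j: "j < n" "i \<noteq> j" by auto
    show "pnu_ge d (beta a n i j * (wt j - wt i)) (- piinv d a n + r)"
      by (rule pnu_ge_mult[OF beta_bound[OF i j] pnu_ge_diff[OF d w[OF j(1)] w[OF i]]])
  qed
  thus ?thesis by (simp add: bmat_expand[OF i] algebra_simps)
qed

lemma exists_sol:
  assumes dw: "degree w < n"
  shows "\<exists>u v. inF a n u \<and> inF a n v \<and> u * pdx d (fpol a n) + v * pderiv (fpol a n) = w"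
proof -
  have sb: "(\<Sum>i<n. matvec n (Bmat a n) (coord a n w) i) = 0" by (rule colsum_B)
  obtain x where sx: "(\<Sum>j<n. x j) = 0" and Ax: "\<forall>i<n. matvec n (Amat d a n) x i = matvec n (Bmat a n) (coord a n w) i"
    using exist_A[where a=a and n=n and d=d, OF d dist pos' n1 sb] by blast
  define u where "u = elem a n x"
  have cu: "coord a n u i = x i" if "i < n" for i unfolding u_def by (rule coord_elem[OF that])
  have uF: "inF a n u"
  proof -
    have "degree u < n" unfolding u_def using degree_elem[of x] n1 by linarith
    moreover have "(\<Sum>i<n. coord a n u i) = 0" using sx cu by simp
    ultimately show ?thesis by (simp add: inF_def inE_def)
  qed
  have mv: "matvec n (Amat d a n) (coord a n u) i = matvec n (Amat d a n) x i" for i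
    unfolding matvec_def using cu by simp
  define v where "v = (\<Sum>i<n. smult (coord a n u i * pder d (a i) + coord a n w i / epsv a n i) (eps a n i))"
  have R: "inF a n u
      \<and> (\<forall>i<n. matvec n (Amat d a n) (coord a n u) i = matvec n (Bmat a n) (coord a n w) i)
      \<and> v = (\<Sum>i<n. smult (coord a n u i * pder d (a i) + coord a n w i / epsv a n i) (eps a n i))"
    using uF Ax mv v_def by simp
  have "inF a n u \<and> inF a n v \<and> u * pdx d (fpol a n) + v * pderiv (fpol a n) = w"
    using char_iff[OF n2 dw, of u v d] R by blast
  thus ?thesis by blast
qed

end


context vset
begin

lemma val_ge_coord: "val_ge d a n p r \<Longrightarrow> j < n \<Longrightarrow> pnu_ge d (coord a n p j) r"
  by (simp add: val_ge_def)

lemma u_bound: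
  assumes uF: "inF a n u"
    and AB: "\<forall>i<n. matvec n (Amat d a n) (coord a n u) i = matvec n (Bmat a n) (coord a n w) i"
    and wr: "val_ge d a n w r"
  shows "val_ge d a n u (r - thetainv d a n)"
  unfolding val_ge_def
proof (intro allI impI)
  fix j assume j: "j < n"
  have sx: "(\<Sum>j<n. coord a n u j) = 0" using uF by (simp add: inF_def)
  have H: "\<And>i. i < n \<Longrightarrow> pnu_ge d (matvec n (Amat d a n) (coord a n u) i) (r - piinv d a n)"
    using AB B_bound[OF _ val_ge_coord[OF wr]] by simp
  have "pnu_ge d (coord a n u j) (r - piinv d a n + 1)"
    by (rule keyK) (use d dist pos' sx H j in auto)
  thus "pnu_ge d (coord a n u j) (r - thetainv d a n)" by (simp add: thetainv_def algebra_simps)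
qed

lemma mi_le: assumes i: "i < n" shows "mi d a n i + deltainv d a n \<le> piinv d a n"
proof -
  define j where "j = (if i = 0 then 1 else 0::nat)"
  have j: "j < n" "i \<noteq> j" using n2 by (auto simp: j_def)
  show ?thesis using delta_le_mij[OF i j(1) j(2)] pi_ge[OF i j(1) j(2)] by simp
qed

lemma v_bound:
  assumes i: "i < n" and x: "pnu_ge d x (r - thetainv d a n)" and w: "pnu_ge d wi r"
  shows "pnu_ge d (x * pder d (a i) + wi / epsv a n i) (r - tauinv d a n)"
proof (rule pnu_ge_add[OF d])
  have p: "pnu_ge d (pder d (a i)) (deltainv d a n - 1)" by (rule pnu_ge_pder[OF d ge_delta[OF i]])
  show "pnu_ge d (x * pder d (a i)) (r - tauinv d a n)"
    using pnu_ge_mult[OF x p] by (simp add: thetainv_def tauinv_def algebra_simps)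
  have "pnu_ge d (wi / epsv a n i) (r - mi d a n i)"
    using pnu_ge_divide[OF w epsv_nz[OF i]] mi_epsv[OF i] by simp
  thus "pnu_ge d (wi / epsv a n i) (r - tauinv d a n)"
    by (rule pnu_ge_mono[OF d]) (use mi_le[OF i] in \<open>simp add: tauinv_def\<close>)
qed

lemma g_bound:
  assumes i: "i < n" and x: "pnu_ge d x (r - thetainv d a n)"
    and w: "\<And>j. j < n \<Longrightarrow> pnu_ge d (wt j) r"
  shows "pnu_ge d (pder d x + (\<Sum>j\<in>{..<n}-{i}. (wt i / epsv a n j + wt j / epsv a n i) / (a i - a j)))
      (r - piinv d a n)"
proof (rule pnu_ge_add[OF d])
  show "pnu_ge d (pder d x) (r - piinv d a n)"
    using pnu_ge_pder[OF d x] by (simp add: thetainv_def)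
  show "pnu_ge d (\<Sum>j\<in>{..<n}-{i}. (wt i / epsv a n j + wt j / epsv a n i) / (a i - a j)) (r - piinv d a n)"
  proof (rule pnu_ge_sum[OF d])
    fix j assume "j \<in> {..<n}-{i}"
    hence j: "j < n" "i \<noteq> j" by auto
    have Dnz: "a i - a j \<noteq> 0" using dist i j by auto
    have t1: "pnu_ge d (wt i / epsv a n j) (r - piinv d a n + mij d a i j)"
    proof -
      have "pnu_ge d (wt i / epsv a n j) (r - mi d a n j)"
        using pnu_ge_divide[OF w[OF i] epsv_nz[OF j(1)]] mi_epsv[OF j(1)] by simp
      thus ?thesis
        by (rule pnu_ge_mono[OF d]) (use pi_ge[OF j(1) i] j mij_sym[of i j] in simp)
    qed
    have t2: "pnu_ge d (wt j / epsv a n i) (r - piinv d a n + mij d a i j)"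
    proof -
      have "pnu_ge d (wt j / epsv a n i) (r - mi d a n i)"
        using pnu_ge_divide[OF w[OF j(1)] epsv_nz[OF i]] mi_epsv[OF i] by simp
      thus ?thesis
        by (rule pnu_ge_mono[OF d]) (use pi_ge[OF i j(1) j(2)] in simp)
    qed
    have "pnu_ge d ((wt i / epsv a n j + wt j / epsv a n i) / (a i - a j))
        (r - piinv d a n + mij d a i j - pnu d (a i - a j))"
      by (rule pnu_ge_divide[OF pnu_ge_add[OF d t1 t2] Dnz])
    thus "pnu_ge d ((wt i / epsv a n j + wt j / epsv a n i) / (a i - a j)) (r - piinv d a n)"
      by (simp add: mij_def)
  qed
qed

end


context vset
begin

lemma main_loc:
  shows
    "(\<forall>w. inE n w \<longrightarrow>
        (\<exists>u v. inF a n u \<and> inF a n v \<and> u * pdx d (fpol a n) + v * pderiv (fpol a n) = w) \<and>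
        (\<forall>u v. (inF a n u \<and> inF a n v \<and> u * pdx d (fpol a n) + v * pderiv (fpol a n) = w)
           \<longleftrightarrow> (inF a n u
                \<and> (\<forall>i<n. matvec n (Amat d a n) (coord a n u) i = matvec n (Bmat a n) (coord a n w) i)
                \<and> v = (\<Sum>i<n. smult (coord a n u i * pder d (a i) + coord a n w i / epsv a n i)
                                   (eps a n i)))))
     \<and> (\<forall>r::rat. \<forall>w. inE n w \<and> val_ge d a n w r \<longrightarrow>
          (\<exists>u v. inF a n u \<and> val_ge d a n u (r - thetainv d a n)
               \<and> inF a n v \<and> val_ge d a n v (r - tauinv d a n)
               \<and> w = u * pdx d (fpol a n) + v * pderiv (fpol a n)))
     \<and> (\<forall>r::rat. \<forall>u v w. inE n w \<and> val_ge d a n w r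
          \<and> inF a n u \<and> val_ge d a n u (r - thetainv d a n)
          \<and> inF a n v \<and> val_ge d a n v (r - tauinv d a n)
          \<and> w = u * pdx d (fpol a n) + v * pderiv (fpol a n)
          \<longrightarrow> inF a n (pdx d u + pderiv v) \<and> val_ge d a n (pdx d u + pderiv v) (r - piinv d a n))"
proof (intro conjI allI impI)
  fix w assume "inE n w"
  hence dw: "degree w < n" by (simp add: inE_def)
  show "\<exists>u v. inF a n u \<and> inF a n v \<and> u * pdx d (fpol a n) + v * pderiv (fpol a n) = w"
    by (rule exists_sol[OF dw])
  fix u v
  show "(inF a n u \<and> inF a n v \<and> u * pdx d (fpol a n) + v * pderiv (fpol a n) = w)
           \<longleftrightarrow> (inF a n u
                \<and> (\<forall>i<n. matvec n (Amat d a n) (coord a n u) i = matvec n (Bmat a n) (coord a n w) i)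
                \<and> v = (\<Sum>i<n. smult (coord a n u i * pder d (a i) + coord a n w i / epsv a n i)
                                   (eps a n i)))"
    by (rule char_iff[OF n2 dw])
next
  fix r :: rat and w
  assume H: "inE n w \<and> val_ge d a n w r"
  hence dw: "degree w < n" and wr: "val_ge d a n w r" by (auto simp: inE_def)
  obtain u v where uv: "inF a n u" "inF a n v" "u * pdx d (fpol a n) + v * pderiv (fpol a n) = w"
    using exists_sol[OF dw] by blast
  have R: "inF a n u
                \<and> (\<forall>i<n. matvec n (Amat d a n) (coord a n u) i = matvec n (Bmat a n) (coord a n w) i)
                \<and> v = (\<Sum>i<n. smult (coord a n u i * pder d (a i) + coord a n w i / epsv a n i)
                                   (eps a n i))"
    using char_iff[OF n2 dw, of u v d] uv by blast
  have ub: "val_ge d a n u (r - thetainv d a n)" by (rule u_bound) (use R wr in auto)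
  define vf where "vf j = coord a n u j * pder d (a j) + coord a n w j / epsv a n j" for j
  have vE: "v = elem a n vf" using R by (simp add: Defs.elem_def vf_def)
  have vb: "val_ge d a n v (r - tauinv d a n)"
    unfolding val_ge_def
  proof (intro allI impI)
    fix i assume i: "i < n"
    have "coord a n v i = vf i" unfolding vE by (rule coord_elem[OF i])
    thus "pnu_ge d (coord a n v i) (r - tauinv d a n)"
      unfolding vf_def using v_bound[OF i val_ge_coord[OF ub i] val_ge_coord[OF wr i]] by simp
  qed
  show "\<exists>u v. inF a n u \<and> val_ge d a n u (r - thetainv d a n)
               \<and> inF a n v \<and> val_ge d a n v (r - tauinv d a n)
               \<and> w = u * pdx d (fpol a n) + v * pderiv (fpol a n)"
    using uv ub vb by metis
next
  fix r :: rat and u v w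
  assume H: "inE n w \<and> val_ge d a n w r
          \<and> inF a n u \<and> val_ge d a n u (r - thetainv d a n)
          \<and> inF a n v \<and> val_ge d a n v (r - tauinv d a n)
          \<and> w = u * pdx d (fpol a n) + v * pderiv (fpol a n)"
  hence dw: "degree w < n" and wr: "val_ge d a n w r" and uF: "inF a n u" and vF: "inF a n v"
    and ub: "val_ge d a n u (r - thetainv d a n)"
    and eq: "u * pdx d (fpol a n) + v * pderiv (fpol a n) = w" by (auto simp: inE_def)
  have R: "inF a n u
                \<and> (\<forall>i<n. matvec n (Amat d a n) (coord a n u) i = matvec n (Bmat a n) (coord a n w) i)
                \<and> v = (\<Sum>i<n. smult (coord a n u i * pder d (a i) + coord a n w i / epsv a n i)
                                   (eps a n i))"
    using char_iff[OF n2 dw, of u v d] uF vF eq by blast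
  hence AB: "\<forall>i<n. matvec n (Amat d a n) (coord a n u) i = matvec n (Bmat a n) (coord a n w) i" by blast
  define vf where "vf = (\<lambda>j. coord a n u j * pder d (a j) + coord a n w j / epsv a n j)"
  have vE: "v = elem a n vf" using R by (simp add: Defs.elem_def vf_def)
  have du: "degree u < n" using uF by (simp add: inF_def inE_def)
  have dv: "degree v < n" using vF by (simp add: inF_def inE_def)
  have uE: "u = elem a n (coord a n u)" by (rule lagrange[OF du])
  let ?g = "pdx d u + pderiv v"
  have dg: "degree ?g < n"
  proof -
    have "degree (pdx d u) < n" using degree_pdx[of d u] du by linarith
    moreover have "degree (pderiv v) < n" using dv by (simp add: degree_pderiv)
    ultimately show ?thesis by (intro degree_add_less)
  qed
  have cu: "coeff u (n - 1) = 0" using uF sum_coord[OF du] by (simp add: inF_def)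
  have cv: "coeff v n = 0" using dv by (intro coeff_eq_0) simp
  have "coeff ?g (n - 1) = 0"
    using cu cv n2 by (simp add: coeff_pdx coeff_pderiv)
  hence gF: "inF a n ?g" using sum_coord[OF dg] dg by (simp add: inF_def inE_def)
  have gb: "val_ge d a n ?g (r - piinv d a n)"
    unfolding val_ge_def
  proof (intro allI impI)
    fix i assume i: "i < n"
    have gg: "?g = pdx d (elem a n (coord a n u)) + pderiv (elem a n vf)"
      by (simp only: uE[symmetric] vE[symmetric])
    have "coord a n ?g i = poly (pdx d (elem a n (coord a n u)) + pderiv (elem a n vf)) (a i) / epsv a n i"
      unfolding gg by (rule coord_def)
    also have "\<dots> = pder d (coord a n u i)
        + (\<Sum>j\<in>{..<n}-{i}. (coord a n w i / epsv a n j + coord a n w j / epsv a n i) / (a i - a j))"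
      unfolding vf_def by (rule g_coord[OF n1 i]) (use AB i in blast)
    finally show "pnu_ge d (coord a n ?g i) (r - piinv d a n)"
      using g_bound[OF i val_ge_coord[OF ub i] val_ge_coord[OF wr]] by simp
  qed
  show "inF a n ?g" by (rule gF)
  show "val_ge d a n ?g (r - piinv d a n)" by (rule gb)
qed

end



theorem mainTheorem14:
  fixes d n :: nat and a :: "nat \<Rightarrow> complex fls"
  assumes d: "d \<ge> 1"
    and n: "n \<ge> 2"
    and distinct: "\<And>i j. i < n \<Longrightarrow> j < n \<Longrightarrow> i \<noteq> j \<Longrightarrow> a i \<noteq> a j"
    and pos: "\<And>i. i < n \<Longrightarrow> a i \<noteq> 0 \<Longrightarrow> pnu d (a i) > 0"
  shows
    \<comment> \<open>(i): existence and explicit form of the solution\<close>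
    "(\<forall>w. inE n w \<longrightarrow>
        (\<exists>u v. inF a n u \<and> inF a n v \<and> u * pdx d (fpol a n) + v * pderiv (fpol a n) = w) \<and>
        (\<forall>u v. (inF a n u \<and> inF a n v \<and> u * pdx d (fpol a n) + v * pderiv (fpol a n) = w)
           \<longleftrightarrow> (inF a n u
                \<and> (\<forall>i<n. matvec n (Amat d a n) (coord a n u) i = matvec n (Bmat a n) (coord a n w) i)
                \<and> v = (\<Sum>i<n. smult (coord a n u i * pder d (a i) + coord a n w i / epsv a n i)
                                   (eps a n i)))))
     \<and> (\<forall>r::rat. \<forall>w. inE n w \<and> val_ge d a n w r \<longrightarrow>
          (\<exists>u v. inF a n u \<and> val_ge d a n u (r - thetainv d a n)
               \<and> inF a n v \<and> val_ge d a n v (r - tauinv d a n)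
               \<and> w = u * pdx d (fpol a n) + v * pderiv (fpol a n)))
     \<and> (\<forall>r::rat. \<forall>u v w. inE n w \<and> val_ge d a n w r
          \<and> inF a n u \<and> val_ge d a n u (r - thetainv d a n)
          \<and> inF a n v \<and> val_ge d a n v (r - tauinv d a n)
          \<and> w = u * pdx d (fpol a n) + v * pderiv (fpol a n)
          \<longrightarrow> inF a n (pdx d u + pderiv v) \<and> val_ge d a n (pdx d u + pderiv v) (r - piinv d a n))"
proof -
  interpret vset a n d
    by unfold_locales (use d n distinct pos in auto)
  show ?thesis by (rule main_loc)
qed

end
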